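(* Let $V$ be an integrable $U_{q,\pi}(\mathfrak{sl}_2)$-module. There is a $\mathbb Q(q)^\pi$-linear automorphism $T:V\to V$ sending $1_{-k}V$ onto $1_kV$ for every $k\in\mathbb Z$, given on $v\in 1_{-k}V$ by $$T(v)=\sum_{d\ge\max(0,-k)}(-q)^dE^{(k+d)}F^{(d)}v,$$ whose inverse is given on $v\in 1_kV$ by $$T^{-1}(v)=\sum_{d\ge\max(0,-k)}(-q)^{-d}\,\overline F^{(k+d)}\,\overline E^{(d)}v.$$
   Context: $\mathbb Q(q)^\pi:=\mathbb Q(q)[\pi]/(\pi^2-1)$; $[n]_{q,\pi}:=\frac{(\pi q)^n-q^{-n}}{\pi q-q^{-1}}$, $[d]^!_{q,\pi}:=[d]_{q,\pi}\cdots[1]_{q,\pi}$. The bar involution is the $\mathbb Q^\pi$-algebra involution $c\mapsto\overline c$ of $\mathbb Q(q)^\pi$ with $\overline q=q^{-1}$, $\overline\pi=\pi$. $U_{q,\pi}(\mathfrak{sl}_2)$ is the locally unital $\mathbb Q(q)^\pi$-algebra with mutually orthogonal idempotents $1_k$ ($k\in\mathbb Z$) and generators $E1_k=1_{k+2}E$, $F1_k=1_{k-2}F$ subject to $EF1_k-\pi FE1_k=\overline{[k]_{q,\pi}}\,1_k$ for all $k$. Divided powers: $E^{(d)}1_k:=E^d1_k/[d]^!_{q,\pi}$, $F^{(d)}1_k:=F^d1_k/[d]^!_{q,\pi}$, $\overline E^{(d)}1_k:=E^d1_k/\overline{[d]^!_{q,\pi}}$, $\overline F^{(d)}1_k:=F^d1_k/\overline{[d]^!_{q,\pi}}$.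 A module is a locally unital left module $V=\bigoplus_k1_kV$; it is integrable if every $v\in 1_kV$ is annihilated by $E^n1_k$ and $F^n1_k$ for $n\gg0$. *)

theory Defs
  imports Main "HOL-Computational_Algebra.Polynomial" "HOL-Computational_Algebra.Fraction_Field"
begin

type_synonym Qq = "rat poly fract"

definition qQ :: Qq where "qQ = Fract [:0, 1:] 1"

definition subinv :: "rat poly \<Rightarrow> Qq" where
  "subinv p = poly (map_poly (\<lambda>c. Fract [:c:] 1) p) (inverse qQ)"

text \<open>Bar involution on Q(q): q maps to q^{-1} (Q-linear, field automorphism).\<close>
definition barQ :: "Qq \<Rightarrow> Qq" where
  "barQ x = (SOME y. \<exists>a b. b \<noteq> 0 \<and> x = Fract a b \<and> y = subinv a / subinv b)"

section \<open>The ring Q(q)^pi = Q(q)[pi]/(pi^2 - 1); QP a b stands for a + b pi\<close>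

datatype qpi = QP Qq Qq

fun qfst :: "qpi \<Rightarrow> Qq" where "qfst (QP a b) = a"
fun qsnd :: "qpi \<Rightarrow> Qq" where "qsnd (QP a b) = b"

instantiation qpi :: comm_ring_1
begin
definition "0 = QP 0 0"
definition "1 = QP 1 0"
definition "x + y = QP (qfst x + qfst y) (qsnd x + qsnd y)"
definition "- x = QP (- qfst x) (- qsnd x)"
definition "x - y = QP (qfst x - qfst y) (qsnd x - qsnd y)"
definition "x * y = QP (qfst x * qfst y + qsnd x * qsnd y) (qfst x * qsnd y + qsnd x * qfst y)"
instance
proof
  fix a b c :: qpi
  show "a * b * c = a * (b * c)"
    by (cases a; cases b; cases c) (simp add: times_qpi_def algebra_simps)
  show "a * b = b * a"
    by (cases a; cases b) (simp add: times_qpi_def algebra_simps)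
  show "1 * a = a"
    by (cases a) (simp add: times_qpi_def one_qpi_def)
  show "a + b + c = a + (b + c)"
    by (cases a; cases b; cases c) (simp add: plus_qpi_def algebra_simps)
  show "a + b = b + a"
    by (cases a; cases b) (simp add: plus_qpi_def algebra_simps)
  show "0 + a = a"
    by (cases a) (simp add: plus_qpi_def zero_qpi_def)
  show "- a + a = 0"
    by (cases a) (simp add: plus_qpi_def uminus_qpi_def zero_qpi_def)
  show "a - b = a + - b"
    by (cases a; cases b) (simp add: plus_qpi_def uminus_qpi_def minus_qpi_def)
  show "(a + b) * c = a * c + b * c"
    by (cases a; cases b; cases c) (simp add: plus_qpi_def times_qpi_def algebra_simps)
  show "(0::qpi) \<noteq> 1"
    by (simp add: zero_qpi_def one_qpi_def)
qed
end

definition qv :: qpi where "qv = QP qQ 0"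
definition piv :: qpi where "piv = QP 0 1"

text \<open>Inverse in Q(q)^pi (a + b pi is invertible iff a^2 \<noteq> b^2); 0 otherwise.\<close>
definition qinv :: "qpi \<Rightarrow> qpi" where
  "qinv x = QP (qfst x / (qfst x ^ 2 - qsnd x ^ 2)) (- qsnd x / (qfst x ^ 2 - qsnd x ^ 2))"

definition qpow :: "qpi \<Rightarrow> int \<Rightarrow> qpi" where
  "qpow x n = (if n \<ge> 0 then x ^ nat n else qinv x ^ nat (- n))"

definition qbar :: "qpi \<Rightarrow> qpi" where
  "qbar x = QP (barQ (qfst x)) (barQ (qsnd x))"

definition qint :: "int \<Rightarrow> qpi" where
  "qint n = (qpow (piv * qv) n - qpow qv (- n)) * qinv (piv * qv - qpow qv (-1))"

definition qfact :: "nat \<Rightarrow> qpi" where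
  "qfact d = (\<Prod>i\<in>{1..d}. qint (int i))"

text \<open>A locally unital U_{q,pi}(sl_2)-module V = (+)_k 1_k V: scal is the Q(q)^pi-action,
  P k is the action of the idempotent 1_k, E and F the actions of E and F (i.e. sum_k E1_k, sum_k F1_k).\<close>
definition qlinear :: "(qpi \<Rightarrow> 'v::ab_group_add \<Rightarrow> 'v) \<Rightarrow> ('v \<Rightarrow> 'v) \<Rightarrow> bool" where
  "qlinear scal f \<longleftrightarrow> (\<forall>x y. f (x + y) = f x + f y) \<and> (\<forall>c x. f (scal c x) = scal c (f x))"

definition Uqpi_module ::
  "(qpi \<Rightarrow> 'v::ab_group_add \<Rightarrow> 'v) \<Rightarrow> (int \<Rightarrow> 'v \<Rightarrow> 'v) \<Rightarrow> ('v \<Rightarrow> 'v) \<Rightarrow> ('v \<Rightarrow> 'v) \<Rightarrow> bool" where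
  "Uqpi_module scal P E F \<longleftrightarrow>
     module scal \<and>
     (\<forall>k. qlinear scal (P k)) \<and> qlinear scal E \<and> qlinear scal F \<and>
     (\<forall>k l v. P k (P l v) = (if k = l then P k v else 0)) \<and>
     (\<forall>v. finite {k. P k v \<noteq> 0} \<and> v = (\<Sum>k\<in>{k. P k v \<noteq> 0}. P k v)) \<and>
     (\<forall>k v. E (P k v) = P (k + 2) (E v)) \<and>
     (\<forall>k v. F (P k v) = P (k - 2) (F v)) \<and>
     (\<forall>k v. E (F (P k v)) - scal piv (F (E (P k v))) = scal (qbar (qint k)) (P k v))"

definition integrable ::
  "(qpi \<Rightarrow> 'v::ab_group_add \<Rightarrow> 'v) \<Rightarrow> (int \<Rightarrow> 'v \<Rightarrow> 'v) \<Rightarrow> ('v \<Rightarrow> 'v) \<Rightarrow> ('v \<Rightarrow> 'v) \<Rightarrow> bool" where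
  "integrable scal P E F \<longleftrightarrow> Uqpi_module scal P E F \<and>
     (\<forall>k v. v \<in> range (P k) \<longrightarrow> (\<exists>n. \<forall>m\<ge>n. (E ^^ m) v = 0 \<and> (F ^^ m) v = 0))"

definition divpow :: "(qpi \<Rightarrow> 'v \<Rightarrow> 'v) \<Rightarrow> ('v \<Rightarrow> 'v) \<Rightarrow> nat \<Rightarrow> 'v \<Rightarrow> 'v" where
  "divpow scal X d v = scal (qinv (qfact d)) ((X ^^ d) v)"

definition divpow_bar :: "(qpi \<Rightarrow> 'v \<Rightarrow> 'v) \<Rightarrow> ('v \<Rightarrow> 'v) \<Rightarrow> nat \<Rightarrow> 'v \<Rightarrow> 'v" where
  "divpow_bar scal X d v = scal (qinv (qbar (qfact d))) ((X ^^ d) v)"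

definition fsum :: "(nat \<Rightarrow> 'v::comm_monoid_add) \<Rightarrow> nat set \<Rightarrow> 'v" where
  "fsum f A = (\<Sum>d\<in>{d\<in>A. f d \<noteq> 0}. f d)"

end

theory Submission
  imports Defs "HOL-Computational_Algebra.Formal_Power_Series"
begin


definition iota :: "rat poly \<Rightarrow> Qq" where "iota p = Fract p 1"

lemma iota_add: "iota (p + r) = iota p + iota r" by (simp add: iota_def)
lemma iota_mult: "iota (p * r) = iota p * iota r" by (simp add: iota_def)
lemma iota_0: "iota 0 = 0" by (simp add: iota_def Zero_fract_def)
lemma iota_1: "iota 1 = 1" by (simp add: iota_def One_fract_def)
lemma iota_eq0: "iota p = 0 \<longleftrightarrow> p = 0" by (simp add: iota_def Zero_fract_def eq_fract)
lemma iota_pow: "iota (p ^ n) = iota p ^ n" by (induct n) (simp_all add: iota_1 iota_mult)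
lemma qQ_iota: "qQ = iota [:0,1:]" by (simp add: qQ_def iota_def)
lemma qQ_nz: "qQ \<noteq> 0" by (simp add: qQ_iota iota_eq0)

lemma iota_const_mult: "iota [:a * c:] = iota [:a:] * iota [:c:]"
  by (simp add: iota_mult[symmetric] mult_ac)
lemma iota_const_add: "iota [:a + c:] = iota [:a:] + iota [:c:]"
  by (simp add: iota_add[symmetric])

lemma subinv_pCons: "subinv (pCons c p) = iota [:c:] + inverse qQ * subinv p"
  by (simp add: subinv_def map_poly_pCons iota_def Zero_fract_def eq_fract)

lemma subinv_0: "subinv 0 = 0" by (simp add: subinv_def)

lemma subinv_const: "subinv [:c:] = iota [:c:]"
  using subinv_pCons[of c 0] by (simp add: subinv_0)

lemma subinv_add: "subinv (p + r) = subinv p + subinv r"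
proof (induct p arbitrary: r rule: pCons_induct)
  case 0 then show ?case by (simp add: subinv_0)
next
  case (pCons a p)
  note IH = pCons(2)
  show ?case
  proof (cases r rule: pCons_cases)
    case (pCons b r')
    then show ?thesis using IH[of r']
      by (simp add: subinv_pCons iota_const_add algebra_simps)
  qed
qed


lemma subinv_smult: "subinv (smult c p) = iota [:c:] * subinv p"
  by (induct p rule: pCons_induct) (simp_all add: subinv_0 subinv_pCons iota_const_mult algebra_simps)

lemma subinv_mult: "subinv (p * r) = subinv p * subinv r"
  by (induct p rule: pCons_induct)
     (simp_all add: subinv_0 subinv_pCons subinv_add subinv_smult iota_0 algebra_simps)

lemma subinv_1: "subinv 1 = 1"
  using subinv_const[of 1] by (simp add: one_pCons iota_1 flip: one_pCons)

lemma iota_monom: "iota (monom c n) = iota [:c:] * qQ ^ n"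
proof -
  have "monom c n = [:c:] * [:0,1:]^n" by (simp add: monom_altdef)
  then show ?thesis by (simp only: qQ_iota iota_mult iota_pow)
qed

lemma subinv_reflect: "qQ ^ degree p * subinv p = iota (reflect_poly p)"
proof (induct p rule: pCons_induct)
  case 0 then show ?case by (simp add: subinv_0 iota_0)
next
  case (pCons c p)
  show ?case
  proof (cases "p = 0")
    case True then show ?thesis by (simp add: subinv_const)
  next
    case False
    then show ?thesis using pCons(2) qQ_nz
      by (simp add: subinv_pCons reflect_poly_pCons' iota_add iota_monom algebra_simps)
         (simp add: field_simps)
  qed
qed

lemma subinv_eq0: "subinv p = 0 \<longleftrightarrow> p = 0"
proof
  assume "subinv p = 0"
  then have "iota (reflect_poly p) = 0" using subinv_reflect[of p] by simp
  then show "p = 0" by (simp add: iota_eq0)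
qed (simp add: subinv_0)

lemma barQ_Fract: assumes "b \<noteq> 0" shows "barQ (Fract a b) = subinv a / subinv b"
proof -
  let ?P = "\<lambda>y. \<exists>a' b'. b' \<noteq> 0 \<and> Fract a b = Fract a' b' \<and> y = subinv a' / subinv b'"
  have "?P (subinv a / subinv b)" using assms by blast
  then have "?P (barQ (Fract a b))" unfolding barQ_def by (rule someI)
  then obtain a' b' where b': "b' \<noteq> 0" and eq: "Fract a b = Fract a' b'" and y: "barQ (Fract a b) = subinv a' / subinv b'"
    by blast
  from eq assms b' have "a * b' = a' * b" by (simp add: eq_fract)
  then have "subinv a * subinv b' = subinv a' * subinv b" by (simp add: subinv_mult[symmetric])
  moreover have "subinv b \<noteq> 0" "subinv b' \<noteq> 0" using assms b' by (simp_all add: subinv_eq0)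
  ultimately show ?thesis using y by (simp add: frac_eq_eq)
qed

lemma barQ_add: "barQ (x + y) = barQ x + barQ y"
proof (cases x; cases y)
  fix a b c d :: "rat poly" assume x: "x = Fract a b" "b \<noteq> 0" and y: "y = Fract c d" "d \<noteq> 0"
  have "subinv b \<noteq> 0" "subinv d \<noteq> 0" using x y by (simp_all add: subinv_eq0)
  then show ?thesis using x y by (simp add: barQ_Fract subinv_add subinv_mult field_simps)
qed

lemma barQ_mult: "barQ (x * y) = barQ x * barQ y"
proof (cases x; cases y)
  fix a b c d :: "rat poly" assume x: "x = Fract a b" "b \<noteq> 0" and y: "y = Fract c d" "d \<noteq> 0"
  have "subinv b \<noteq> 0" "subinv d \<noteq> 0" using x y by (simp_all add: subinv_eq0)
  then show ?thesis using x y by (simp add: barQ_Fract subinv_add subinv_mult field_simps)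
qed

lemma barQ_1: "barQ 1 = 1"
  by (simp add: One_fract_def barQ_Fract subinv_1)

lemma barQ_0: "barQ 0 = 0"
proof -
  have "barQ (Fract 0 1) = 0" by (simp add: barQ_Fract subinv_0)
  then show ?thesis by (simp add: Zero_fract_def)
qed

lemma barQ_inverse: "barQ (inverse x) = inverse (barQ x)"
proof (cases x)
  fix a b :: "rat poly" assume x: "x = Fract a b" "b \<noteq> 0"
  show ?thesis
  proof (cases "a = 0")
    case True
    then have "x = 0" using x by (simp add: Zero_fract_def eq_fract)
    then show ?thesis by (simp add: barQ_0)
  next
    case False
    then show ?thesis using x by (simp add: barQ_Fract)
  qed
qed

lemma barQ_qQ: "barQ qQ = inverse qQ"
proof -
  have "subinv [:0,1:] = inverse qQ" using subinv_pCons[of 0 "[:1:]"]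
    by (simp add: subinv_const iota_def flip: Zero_fract_def) (simp add: One_fract_def one_pCons)
  then show ?thesis by (simp add: qQ_def barQ_Fract subinv_1)
qed

lemma barQ_minus: "barQ (- x) = - barQ x"
  using barQ_add[of x "-x"] by (simp add: barQ_0 eq_neg_iff_add_eq_0)
lemma barQ_diff: "barQ (x - y) = barQ x - barQ y"
  using barQ_add[of x "-y"] by (simp add: barQ_minus)
lemma barQ_divide: "barQ (x / y) = barQ x / barQ y"
  by (simp add: divide_inverse barQ_mult barQ_inverse)
lemma barQ_power: "barQ (x ^ n) = barQ x ^ n"
  by (induct n) (simp_all add: barQ_1 barQ_mult)
lemma barQ_powi: "barQ (x powi n) = barQ x powi n"
  by (cases "n \<ge> 0") (simp_all add: power_int_def barQ_power barQ_inverse)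


definition ce :: "Qq \<Rightarrow> qpi \<Rightarrow> Qq" where "ce e x = qfst x + e * qsnd x"

definition sgn1 :: "Qq \<Rightarrow> bool" where "sgn1 e \<longleftrightarrow> e = 1 \<or> e = -1"

lemma sgn1_sq: "sgn1 e \<Longrightarrow> e * e = 1" by (auto simp: sgn1_def)
lemma sgn1_nz: "sgn1 e \<Longrightarrow> e \<noteq> 0" by (auto simp: sgn1_def)

lemma ce_add: "ce e (x + y) = ce e x + ce e y"
  by (simp add: ce_def plus_qpi_def algebra_simps)
lemma ce_diff: "ce e (x - y) = ce e x - ce e y"
  by (simp add: ce_def minus_qpi_def algebra_simps)
lemma ce_minus: "ce e (- x) = - ce e x"
  by (simp add: ce_def uminus_qpi_def algebra_simps)
lemma ce_0: "ce e 0 = 0" by (simp add: ce_def zero_qpi_def)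
lemma ce_1: "ce e 1 = 1" by (simp add: ce_def one_qpi_def)
lemma ce_mult: "sgn1 e \<Longrightarrow> ce e (x * y) = ce e x * ce e y"
  by (auto simp: sgn1_def ce_def times_qpi_def algebra_simps)
lemma ce_power: "sgn1 e \<Longrightarrow> ce e (x ^ n) = ce e x ^ n"
  by (induct n) (simp_all add: ce_1 ce_mult)
lemma ce_sum: "ce e (sum f A) = (\<Sum>a\<in>A. ce e (f a))"
  by (induct A rule: infinite_finite_induct) (simp_all add: ce_0 ce_add)
lemma ce_prod: "sgn1 e \<Longrightarrow> ce e (prod f A) = (\<Prod>a\<in>A. ce e (f a))"
  by (induct A rule: infinite_finite_induct) (simp_all add: ce_1 ce_mult)
lemma ce_of_nat: "ce e (of_nat n) = of_nat n"
  by (induct n) (simp_all add: ce_0 ce_1 ce_add)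
lemma ce_qv: "ce e qv = qQ" by (simp add: ce_def qv_def)
lemma ce_piv: "ce e piv = e" by (simp add: ce_def piv_def)

lemma qpi_eqI: assumes "ce 1 x = ce 1 y" "ce (-1) x = ce (-1) y" shows "x = y"
proof -
  obtain a b where x: "x = QP a b" by (cases x)
  obtain c d where y: "y = QP c d" by (cases y)
  from assms have "a + b = c + d" "a - b = c - d" by (simp_all add: x y ce_def)
  then have "(a + b) + (a - b) = (c + d) + (c - d)" by simp
  then have "2 * a = 2 * c" by (simp add: algebra_simps)
  then have ac: "a = c" by simp
  with \<open>a + b = c + d\<close> have "b = d" by simp
  with ac show ?thesis by (simp add: x y)
qed

lemma qpi_eq_iff: "x = y \<longleftrightarrow> ce 1 x = ce 1 y \<and> ce (-1) x = ce (-1) y"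
  using qpi_eqI by blast

definition qunit :: "qpi \<Rightarrow> bool" where "qunit x \<longleftrightarrow> ce 1 x \<noteq> 0 \<and> ce (-1) x \<noteq> 0"

lemma qunit_ce: "qunit x \<Longrightarrow> sgn1 e \<Longrightarrow> ce e x \<noteq> 0"
  by (auto simp: qunit_def sgn1_def)

lemma ce_qinv: assumes "qunit x" "sgn1 e" shows "ce e (qinv x) = inverse (ce e x)"
proof -
  obtain a b where x: "x = QP a b" by (cases x)
  have n: "a + b \<noteq> 0" "a - b \<noteq> 0" using assms(1) by (auto simp: qunit_def ce_def x)
  define D where "D = a\<^sup>2 - b\<^sup>2"
  have d: "D = (a + b) * (a - b)" by (simp add: D_def algebra_simps power2_eq_square)
  have c: "ce e (qinv x) = (a + e * (- b)) / D" by (simp add: ce_def qinv_def x D_def diff_divide_distrib)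
  have nz: "(a + b) * (a - b) \<noteq> 0" using n by simp
  show ?thesis using assms(2) n nz unfolding c d
    by (auto simp: sgn1_def ce_def x field_simps)
qed

lemma qunit_mult: "qunit x \<Longrightarrow> qunit y \<Longrightarrow> qunit (x * y)"
  by (simp add: qunit_def ce_mult sgn1_def)
lemma qunit_1: "qunit 1" by (simp add: qunit_def ce_1)
lemma qunit_power: "qunit x \<Longrightarrow> qunit (x ^ n)"
  by (induct n) (simp_all add: qunit_1 qunit_mult)
lemma qunit_prod: "(\<And>a. a \<in> A \<Longrightarrow> qunit (f a)) \<Longrightarrow> qunit (prod f A)"
  by (induct A rule: infinite_finite_induct) (simp_all add: qunit_1 qunit_mult)
lemma qunit_qinv: "qunit x \<Longrightarrow> qunit (qinv x)"
  by (simp add: qunit_def ce_qinv sgn1_def)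
lemma qunit_minus: "qunit x \<Longrightarrow> qunit (- x)"
  by (simp add: qunit_def ce_minus)
lemma qunit_piv: "qunit piv" by (simp add: qunit_def ce_piv)
lemma qunit_qv: "qunit qv" by (simp add: qunit_def ce_qv qQ_nz)

lemma qinv_right: "qunit x \<Longrightarrow> x * qinv x = 1"
  by (rule qpi_eqI) (simp_all add: ce_mult ce_qinv ce_1 sgn1_def qunit_ce)
lemma qinv_left: "qunit x \<Longrightarrow> qinv x * x = 1"
  using qinv_right by (simp add: mult.commute)

lemma qinv_mult: "qunit x \<Longrightarrow> qunit y \<Longrightarrow> qinv (x * y) = qinv x * qinv y"
  by (rule qpi_eqI) (simp_all add: ce_mult ce_qinv sgn1_def qunit_mult)
lemma qinv_power: "qunit x \<Longrightarrow> qinv (x ^ n) = qinv x ^ n"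
  by (rule qpi_eqI) (simp_all add: ce_power ce_qinv sgn1_def qunit_power qunit_qinv power_inverse)
lemma qinv_qinv: "qunit x \<Longrightarrow> qinv (qinv x) = x"
  by (rule qpi_eqI) (simp_all add: ce_qinv sgn1_def qunit_qinv)
lemma qinv_1: "qinv 1 = 1"
  by (rule qpi_eqI) (simp_all add: ce_qinv sgn1_def qunit_1 ce_1)

lemma piv_sq: "piv * piv = 1"
  by (simp add: piv_def times_qpi_def one_qpi_def)
lemma qinv_piv: "qinv piv = piv"
  by (rule qpi_eqI) (simp_all add: ce_qinv sgn1_def qunit_piv ce_piv)

lemma ce_qpow: assumes "qunit x" "sgn1 e" shows "ce e (qpow x n) = ce e x powi n"
  using assms by (simp add: qpow_def power_int_def ce_power ce_qinv qunit_qinv power_inverse)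

lemma ce_qbar: assumes "sgn1 e" shows "ce e (qbar x) = barQ (ce e x)"
proof -
  have "barQ (e * y) = e * barQ y" for y using assms
    by (auto simp: sgn1_def barQ_mult barQ_1 barQ_minus)
  then show ?thesis by (simp add: ce_def qbar_def barQ_add)
qed

lemma qQ_pow_iota: "qQ ^ N = iota (monom 1 N)"
  by (simp add: qQ_iota iota_pow monom_altdef)

lemma iota_inj: "iota p = iota r \<longleftrightarrow> p = r" by (simp add: iota_def eq_fract)

lemma qQ_pow_ne: assumes "N > 0" shows "qQ ^ N \<noteq> 1" "qQ ^ N \<noteq> -1"
proof -
  have c1: "coeff (monom (1::rat) N) N = 1" by simp
  have c2: "coeff (1::rat poly) N = 0" "coeff (-1::rat poly) N = 0" using assms by (simp_all add: coeff_1)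
  have "monom (1::rat) N \<noteq> 1" using c1 c2 by force
  moreover have "monom (1::rat) N \<noteq> -1" using c1 c2 by force
  moreover have "iota (-1) = -1" using iota_add[of 1 "-1"] by (simp add: iota_0 iota_1 eq_neg_iff_add_eq_0)
  ultimately show "qQ ^ N \<noteq> 1" "qQ ^ N \<noteq> -1"
    by (simp_all add: qQ_pow_iota iota_inj flip: iota_1) (metis iota_inj)
qed


definition qn :: "Qq \<Rightarrow> Qq \<Rightarrow> int \<Rightarrow> Qq" where
  "qn e Q n = ((e * Q) powi n - Q powi (- n)) / (e * Q - inverse Q)"

definition gen :: "Qq \<Rightarrow> bool" where
  "gen Q \<longleftrightarrow> Q \<noteq> 0 \<and> (\<forall>N::nat. N > 0 \<longrightarrow> Q ^ N \<noteq> 1 \<and> Q ^ N \<noteq> -1)"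

lemma gen_qQ: "gen qQ" using qQ_pow_ne qQ_nz by (simp add: gen_def)
lemma inv_pm1: "inverse (x::Qq) = 1 \<longleftrightarrow> x = 1" "inverse x = -1 \<longleftrightarrow> x = -1"
  by (metis inverse_1 inverse_inverse_eq, metis inverse_minus_eq inverse_1 inverse_inverse_eq)
lemma gen_inv: "gen Q \<Longrightarrow> gen (inverse Q)"
  unfolding gen_def by (simp add: power_inverse inv_pm1)

lemma sgn1_powi: "sgn1 e \<Longrightarrow> e powi n * e powi n = 1"
  by (auto simp: sgn1_def power_int_mult_distrib[symmetric])
lemma neg1_pow_cases: "(-1::Qq) ^ k = 1 \<or> (-1::Qq) ^ k = -1"
  by (cases "even k") simp_all
lemma sgn1_powi_cases: "sgn1 e \<Longrightarrow> e powi n = 1 \<or> e powi n = -1"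
proof -
  assume e: "sgn1 e"
  show ?thesis
  proof (cases "e = 1")
    case True then show ?thesis by simp
  next
    case False
    then have e': "e = -1" using e by (simp add: sgn1_def)
    show ?thesis
    proof (cases "n \<ge> 0")
      case True then show ?thesis using e' neg1_pow_cases[of "nat n"] by (simp add: power_int_def)
    next
      case False then show ?thesis using e' neg1_pow_cases[of "nat (-n)"] by (auto simp: power_int_def)
    qed
  qed
qed

lemma den_nz: "sgn1 e \<Longrightarrow> gen Q \<Longrightarrow> e * Q - inverse Q \<noteq> 0"
proof
  assume e: "sgn1 e" and g: "gen Q" and h: "e * Q - inverse Q = 0"
  have Q: "Q \<noteq> 0" using g by (simp add: gen_def)
  from h Q have "e * Q * Q = 1" by (simp add: field_simps)
  then have "Q ^ 2 = e" using e by (auto simp: sgn1_def power2_eq_square algebra_simps)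
  then show False using g e by (auto simp: gen_def sgn1_def dest!: spec[of _ 2])
qed

lemma key_ne1: assumes e: "sgn1 e" and g: "gen Q" and m: "m > 0" shows "(e * Q) ^ m * Q ^ m \<noteq> 1"
proof
  assume h: "(e * Q) ^ m * Q ^ m = 1"
  have "(e * Q) ^ m * Q ^ m = e ^ m * Q ^ (2 * m)" by (simp add: power_mult_distrib power_mult power2_eq_square mult_ac)
  with h have h2: "e ^ m * Q ^ (2 * m) = 1" by simp
  have "e ^ m = 1 \<or> e ^ m = -1" using e neg1_pow_cases by (auto simp: sgn1_def)
  then have "Q ^ (2 * m) = 1 \<or> Q ^ (2 * m) = -1" using h2 by (auto simp: minus_equation_iff)
  moreover have "2 * m > 0" using m by simp
  ultimately show False using g unfolding gen_def by blast
qed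

lemma qn_nz: assumes e: "sgn1 e" and g: "gen Q" and n: "n \<noteq> 0" shows "qn e Q n \<noteq> 0"
proof
  assume "qn e Q n = 0"
  then have h: "(e * Q) powi n = Q powi (- n)" using den_nz[OF e g] by (simp add: qn_def)
  have Q: "Q \<noteq> 0" and eQ: "e * Q \<noteq> 0" using g e by (auto simp: gen_def sgn1_def)
  show False
  proof (cases "n > 0")
    case True
    then have "(e * Q) ^ nat n = inverse (Q ^ nat n)" using h by (simp add: power_int_def power_inverse)
    then have "(e * Q) ^ nat n * Q ^ nat n = 1" using Q by (simp add: field_simps)
    then show False using key_ne1[OF e g, of "nat n"] True by simp
  next
    case False
    with n have "n < 0" by simp
    then have "inverse ((e * Q) ^ nat (- n)) = Q ^ nat (- n)" using h by (simp add: power_int_def power_inverse power_mult_distrib)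
    then have "(e * Q) ^ nat (- n) * Q ^ nat (- n) = 1" using eQ by (simp add: field_simps)
    then show False using key_ne1[OF e g, of "nat (- n)"] \<open>n < 0\<close> by simp
  qed
qed


lemma qn_bar_aux:
  fixes E X e Q :: Qq
  assumes EE: "E * E = 1" and ee: "e * e = 1" and X: "X \<noteq> 0" and Q: "Q \<noteq> 0"
    and d1: "e * Q - inverse Q \<noteq> 0" and d2: "e * inverse Q - Q \<noteq> 0"
  shows "(E * inverse X - X) / (e * inverse Q - Q) = E * e * ((E * X - inverse X) / (e * Q - inverse Q))"
proof -
  have l: "(E * inverse X - X) / (e * inverse Q - Q) = Q * (E - X * X) / (X * (e - Q * Q))"
    using X Q d2 by (simp add: field_simps)
  have r: "(E * X - inverse X) / (e * Q - inverse Q) = Q * (E * X * X - 1) / (X * (e * Q * Q - 1))"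
    using X Q d1 by (simp add: field_simps)
  have c: "E*e*(E*X*X - 1)*(e - Q*Q) = (E*E)*(e*e)*(X*X) - (E*E)*e*(X*X*Q*Q) - E*(e*e) + E*e*(Q*Q)"
    by algebra
  have c2: "E*e*(E*X*X - 1)*(e - Q*Q) = (E - X*X)*(e*Q*Q - 1)"
    unfolding c EE ee by algebra
  have n1: "e - Q * Q \<noteq> 0" using d2 Q by (auto simp: field_simps)
  have n2: "e * Q * Q - 1 \<noteq> 0" using d1 Q by (auto simp: field_simps)
  show ?thesis unfolding l r using n1 n2 X Q c2
    by (simp add: divide_simps)
qed
lemma qn_bar: assumes e: "sgn1 e" and g: "gen Q" shows "qn e (inverse Q) n = e powi (n - 1) * qn e Q n"
proof -
  have Q: "Q \<noteq> 0" using g by (simp add: gen_def)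
  have en: "e powi (n - 1) = e powi n * e" using e by (auto simp: sgn1_def power_int_diff)
  have d1: "e * Q - inverse Q \<noteq> 0" using den_nz[OF e g] .
  have d2: "e * inverse Q - Q \<noteq> 0" using den_nz[OF e gen_inv[OF g]] by simp
  have "qn e (inverse Q) n = (e powi n * inverse (Q powi n) - Q powi n) / (e * inverse Q - Q)"
    using Q by (simp add: qn_def power_int_mult_distrib power_int_minus power_int_inverse)
  also have "\<dots> = e powi n * e * ((e powi n * Q powi n - inverse (Q powi n)) / (e * Q - inverse Q))"
    by (rule qn_bar_aux[OF sgn1_powi[OF e] sgn1_sq[OF e] _ Q d1 d2]) (use Q in simp)
  also have "\<dots> = e powi (n - 1) * qn e Q n"
    using Q by (simp add: en qn_def power_int_mult_distrib power_int_minus)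
  finally show ?thesis .
qed



lemma powi_split: "x \<noteq> 0 \<Longrightarrow> x powi (m + 1) = x powi m * x \<and> x powi (m - 1) = x powi m / x
  \<and> x powi (n - m) = x powi n / x powi m \<and> x powi (n - m + 1) = x powi n * x / x powi m
  \<and> x powi (n - 2 * m) = x powi n / (x powi m * x powi m) \<and> x powi (- m) = inverse (x powi m)
  \<and> x powi (n + m) = x powi n * x powi m \<and> x powi (n + 2 * m) = x powi n * (x powi m * x powi m)
  \<and> x powi (n + m - 1) = x powi n * x powi m / x \<and> x powi (2 * m) = x powi m * x powi m
  \<and> x powi (n - 2 * m - 1) = x powi n / (x powi m * x powi m * x)"
  for x :: Qq
  by (auto simp add: power_int_add power_int_diff mult_ac power_int_mult power2_eq_square power_int_minus)

lemma I1f: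
  assumes e: "sgn1 e" and g: "gen Q"
  shows "qn e Q (m + 1) * (e powi (n - m - 1) * qn e Q (n - m))
       = e * qn e Q m * (e powi (n - m) * qn e Q (n - m + 1)) + e powi (n - 2*m - 1) * qn e Q (n - 2 * m)"
proof -
  have Q: "Q \<noteq> 0" using g by (simp add: gen_def)
  have e0: "e \<noteq> 0" using e by (rule sgn1_nz)
  have D: "e * Q - inverse Q \<noteq> 0" by (rule den_nz[OF e g])
  have ee: "e * e = 1" using e by (rule sgn1_sq)
  have emm: "e powi m * e powi m = 1" "e powi n * e powi n = 1" using sgn1_powi[OF e] by auto
  have i: "n - m - 1 = n - (m + 1)" "n - 2*m - 1 = n - 2 * m - 1" by simp_all
  show ?thesis
    unfolding qn_def using Q e0 D
    apply (simp add: power_int_mult_distrib powi_split diff_diff_eq)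
    apply (simp add: divide_simps)
    using ee emm
    apply algebra
    done
qed

lemma powi_2m: "x powi (2 * m) = x powi m * x powi m" for x :: Qq
  by (simp add: power_int_mult power2_eq_square power_int_mult_distrib)

lemma I2f:
  assumes e: "sgn1 e" and g: "gen Q"
  shows "qn e Q (m + 1) * (e powi (n + m - 1) * qn e Q (n + m)) - qn e Q m * (e powi (n + m - 2) * qn e Q (n + m - 1))
       = e powi m * (e powi (n + 2 * m - 1) * qn e Q (n + 2 * m))"
proof -
  have Q: "Q \<noteq> 0" using g by (simp add: gen_def)
  have e0: "e \<noteq> 0" using e by (rule sgn1_nz)
  have D: "e * Q - inverse Q \<noteq> 0" by (rule den_nz[OF e g])
  have ee: "e * e = 1" using e by (rule sgn1_sq)
  have emm: "e powi m * e powi m = 1" "e powi n * e powi n = 1" using sgn1_powi[OF e] by auto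
  show ?thesis
    unfolding qn_def using Q e0 D
    apply (simp add: power_int_mult_distrib power_int_add power_int_diff power_int_minus powi_2m)
    apply (simp add: divide_simps)
    using ee emm
    apply algebra
    done
qed


definition bq :: "int \<Rightarrow> qpi" where "bq n = qbar (qint n)"

lemma qunit_den: "qunit (piv * qv - qpow qv (-1))"
proof -
  have "ce e (piv * qv - qpow qv (-1)) = e * qQ - inverse qQ" if "sgn1 e" for e
    using that by (simp add: ce_diff ce_mult ce_piv ce_qv ce_qpow qunit_qv)
  moreover have "1 * qQ - inverse qQ \<noteq> 0" "(-1) * qQ - inverse qQ \<noteq> 0"
    using den_nz[OF _ gen_qQ, of 1] den_nz[OF _ gen_qQ, of "-1"] by (simp_all add: sgn1_def)
  ultimately show ?thesis unfolding qunit_def by (simp add: sgn1_def)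
qed

lemma ce_qint: "sgn1 e \<Longrightarrow> ce e (qint n) = qn e qQ n"
  by (simp add: qint_def qn_def ce_diff ce_mult ce_piv ce_qv ce_qpow qunit_qv qunit_piv qunit_mult
      ce_qinv qunit_den divide_inverse)

lemma barQ_qn: "sgn1 e \<Longrightarrow> barQ (qn e Q n) = qn e (barQ Q) n"
proof -
  assume e: "sgn1 e"
  have be: "barQ e = e" using e by (auto simp: sgn1_def barQ_1 barQ_minus)
  show ?thesis by (simp add: qn_def barQ_divide barQ_diff barQ_mult barQ_powi barQ_inverse be)
qed

lemma ce_bq: "sgn1 e \<Longrightarrow> ce e (bq n) = e powi (n - 1) * qn e qQ n"
  by (simp add: bq_def ce_qbar ce_qint barQ_qn barQ_qQ qn_bar gen_qQ)

lemma qunit_qint: "n \<noteq> 0 \<Longrightarrow> qunit (qint n)"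
  by (simp add: qunit_def ce_qint sgn1_def qn_nz gen_qQ)

lemma qunit_bq: "n \<noteq> 0 \<Longrightarrow> qunit (bq n)"
  using sgn1_powi_cases[of "-1" "n - 1"]
  by (auto simp add: qunit_def ce_bq sgn1_def qn_nz gen_qQ)

lemma qn_0: "qn e Q 0 = 0" by (simp add: qn_def)
lemma qn_1: "sgn1 e \<Longrightarrow> gen Q \<Longrightarrow> qn e Q 1 = 1"
  using den_nz by (simp add: qn_def)

lemma qint_0: "qint 0 = 0" by (rule qpi_eqI) (simp_all add: ce_qint sgn1_def qn_0 ce_0)
lemma qint_1: "qint 1 = 1" by (rule qpi_eqI) (simp_all add: ce_qint sgn1_def qn_1 gen_qQ ce_1)
lemma bq_0: "bq 0 = 0" by (rule qpi_eqI) (simp_all add: ce_bq sgn1_def qn_0 ce_0)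
lemma bq_1: "bq 1 = 1" by (rule qpi_eqI) (simp_all add: ce_bq sgn1_def qn_1 gen_qQ ce_1)

definition sco :: "int \<Rightarrow> nat \<Rightarrow> qpi" where "sco \<mu> d = qint (int d) * bq (\<mu> - int d + 1)"
definition tco :: "int \<Rightarrow> nat \<Rightarrow> qpi" where "tco \<mu> d = - (piv ^ d) * qint (int d) * bq (\<mu> + int d - 1)"

lemma sco_1: "sco \<mu> 1 = bq \<mu>" by (simp add: sco_def qint_1)
lemma tco_1: "tco \<mu> 1 = - piv * bq \<mu>" by (simp add: tco_def qint_1)

lemma sco_step_ce: assumes e: "sgn1 e"
  shows "ce e (piv * sco \<mu> (Suc m) + bq (\<mu> - 2 * int (Suc m))) = ce e (sco \<mu> (Suc (Suc m)))"
proof -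
  have h: "qn e qQ (int m + 1 + 1) * (e powi (\<mu> - (int m + 1) - 1) * qn e qQ (\<mu> - (int m + 1)))
     = e * qn e qQ (int m + 1) * (e powi (\<mu> - (int m + 1)) * qn e qQ (\<mu> - (int m + 1) + 1)) + e powi (\<mu> - 2*(int m + 1) - 1) * qn e qQ (\<mu> - 2 * (int m + 1))"
    by (rule I1f[OF e gen_qQ])
  show ?thesis using h e
    by (simp add: sco_def ce_add ce_mult ce_piv ce_qint ce_bq algebra_simps)
qed

lemma sco_step: "piv * sco \<mu> (Suc m) + bq (\<mu> - 2 * int (Suc m)) = sco \<mu> (Suc (Suc m))"
  by (rule qpi_eqI; rule sco_step_ce; simp add: sgn1_def)

lemma tco_alg: fixes e p A B C D G H :: Qq
  assumes "A * (B * C) - D * (G * H) = p * e * K" "e * e = 1" "p * p = 1"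
  shows "e * (- (e * p) * D * (G * H)) - e * K = - (e * (e * p)) * A * (B * C)"
  using assms by algebra

lemma tco_step_ce: assumes e: "sgn1 e"
  shows "ce e (piv * tco \<mu> (Suc m) - piv * bq (\<mu> + 2 * int (Suc m))) = ce e (tco \<mu> (Suc (Suc m)))"
proof -
  have h: "qn e qQ (int m + 1 + 1) * (e powi (\<mu> + (int m + 1) - 1) * qn e qQ (\<mu> + (int m + 1))) - qn e qQ (int m + 1) * (e powi (\<mu> + (int m + 1) - 2) * qn e qQ (\<mu> + (int m + 1) - 1))
       = e powi (int m + 1) * (e powi (\<mu> + 2 * (int m + 1) - 1) * qn e qQ (\<mu> + 2 * (int m + 1)))"
    by (rule I2f[OF e gen_qQ])
  have ee: "e * e = 1" using e by (rule sgn1_sq)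
  have pm: "e powi (int m + 1) = e ^ m * e" by (simp add: power_int_add)
  have emm: "e ^ m * e ^ m = 1" using ee by (simp flip: power_mult_distrib)
  have a1: "\<mu> + (int m + 1) = \<mu> + int m + 1" "\<mu> + int m + 1 - 1 = \<mu> + int m"
     "\<mu> + int m + 1 - 2 = \<mu> + int m - 1" "2 * (int m + 1) = 2 * int m + 2" "\<mu> + (2 * int m + 2) = \<mu> + 2 * int m + 2"
     "\<mu> + 2 * int m + 2 - 1 = \<mu> + 2 * int m + 1" "int m + 1 + 1 = int m + 2" by simp_all
  have h2: "qn e qQ (int m + 2) * (e powi (\<mu> + int m) * qn e qQ (\<mu> + int m + 1)) - qn e qQ (int m + 1) * (e powi (\<mu> + int m - 1) * qn e qQ (\<mu> + int m))
       = e ^ m * e * (e powi (\<mu> + 2 * int m + 1) * qn e qQ (\<mu> + 2 * int m + 2))"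
    using h unfolding a1 pm .
  have g: "ce e (piv * tco \<mu> (Suc m) - piv * bq (\<mu> + 2 * int (Suc m))) =
     e * (- (e ^ Suc m) * qn e qQ (int m + 1) * (e powi (\<mu> + int m - 1) * qn e qQ (\<mu> + int m)))
     - e * (e powi (\<mu> + 2 * int m + 1) * qn e qQ (\<mu> + 2 * int m + 2))"
    using e by (simp add: tco_def ce_diff ce_mult ce_minus ce_power ce_piv ce_qint ce_bq add_ac)
  have g2: "ce e (tco \<mu> (Suc (Suc m))) = - (e ^ Suc (Suc m)) * qn e qQ (int m + 2) * (e powi (\<mu> + int m) * qn e qQ (\<mu> + int m + 1))"
    using e by (simp add: tco_def ce_diff ce_mult ce_minus ce_power ce_piv ce_qint ce_bq add_ac)
  show ?thesis unfolding g g2 power_Suc by (rule tco_alg[OF h2 ee emm])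
qed

lemma tco_step: "piv * tco \<mu> (Suc m) - piv * bq (\<mu> + 2 * int (Suc m)) = tco \<mu> (Suc (Suc m))"
  by (rule qpi_eqI; rule tco_step_ce; simp add: sgn1_def)


unbundle fps_syntax

definition qq :: "'a::field \<Rightarrow> 'a \<Rightarrow> nat \<Rightarrow> 'a" where "qq a b i = (a ^ i - b ^ i) / (a - b)"
definition qf :: "'a::field \<Rightarrow> 'a \<Rightarrow> nat \<Rightarrow> 'a" where "qf a b N = (\<Prod>i=1..N. qq a b i)"
definition gb :: "'a::field \<Rightarrow> 'a \<Rightarrow> nat \<Rightarrow> nat \<Rightarrow> 'a" where
  "gb a b N K = (if K \<le> N then qf a b N / (qf a b K * qf a b (N - K)) else 0)"

definition ok :: "'a::field \<Rightarrow> 'a \<Rightarrow> bool" where "ok a b \<longleftrightarrow> (\<forall>i>0. a ^ i \<noteq> b ^ i)"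

lemma ok_ab: "ok a b \<Longrightarrow> a \<noteq> b" unfolding ok_def by (metis power_one_right zero_less_one)
lemma qq_nz: "ok a b \<Longrightarrow> i > 0 \<Longrightarrow> qq a b i \<noteq> 0"
  unfolding ok_def qq_def using ok_ab[unfolded ok_def] by auto
lemma qf_Suc: "qf a b (Suc N) = qf a b N * qq a b (Suc N)"
  by (simp add: qf_def)
lemma qf_0: "qf a b 0 = 1" by (simp add: qf_def)
lemma qf_nz: assumes ab: "ok a b" shows "qf a b N \<noteq> 0"
  by (induct N) (simp_all add: qf_0 qf_Suc qq_nz[OF ab])

lemma gb_0: "ok a b \<Longrightarrow> gb a b N 0 = 1"
  using qf_nz[of a b N] by (simp add: gb_def qf_0)
lemma gb_NN: "ok a b \<Longrightarrow> gb a b N N = 1"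
  using qf_nz[of a b N] by (simp add: gb_def qf_0)

lemma qq_pascal: "ok a b \<Longrightarrow> K \<le> N \<Longrightarrow> qq a b (Suc N) = b ^ K * qq a b (Suc N - K) + a ^ (Suc N - K) * qq a b K"
proof -
  assume ab: "ok a b" and K: "K \<le> N"
  have d: "a - b \<noteq> 0" using ok_ab[OF ab] by simp
  have p: "a ^ Suc N = a ^ (Suc N - K) * a ^ K" "b ^ Suc N = b ^ K * b ^ (Suc N - K)"
    using K by (simp_all flip: power_add)
  have "a ^ Suc N - b ^ Suc N = b ^ K * (a ^ (Suc N - K) - b ^ (Suc N - K)) + a ^ (Suc N - K) * (a ^ K - b ^ K)"
    unfolding p by (simp add: algebra_simps)
  then show ?thesis unfolding qq_def by (simp add: add_divide_distrib)
qed


lemma gb_pascal: assumes ab: "ok a b" and K: "1 \<le> K"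
  shows "gb a b (Suc N) K = b ^ K * gb a b N K + a ^ (Suc N - K) * gb a b N (K - 1)"
proof (cases "K \<le> N")
  case True
  obtain K' where K': "K = Suc K'" using K by (cases K) auto
  have nz: "qf a b K' \<noteq> 0" "qf a b (N - K') \<noteq> 0" "qf a b (N - K) \<noteq> 0" "qq a b K \<noteq> 0" "qq a b (Suc N - K) \<noteq> 0"
    using ab K True by (simp_all add: qf_nz qq_nz K')
  have e1: "qf a b K = qf a b K' * qq a b K" by (simp add: K' qf_Suc)
  have e2: "qf a b (Suc N - K) = qf a b (N - K) * qq a b (Suc N - K)"
    using True by (simp add: Suc_diff_le qf_Suc)
  have nk: "N - K' = Suc (N - K)" "Suc N - K = Suc (N - K)" using True K' by simp_all
  have e3: "qf a b (N - K') = qf a b (N - K) * qq a b (Suc N - K)"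
    unfolding nk by (simp add: qf_Suc)
  have e4: "qf a b (Suc N) = qf a b N * qq a b (Suc N)" by (simp add: qf_Suc)
  show ?thesis using True nz qq_pascal[OF ab True] qf_nz[OF ab]
    unfolding gb_def by (simp add: K' e1[unfolded K'] e2[unfolded K'] e3 e4 field_simps)
next
  case False
  show ?thesis
  proof (cases "K = Suc N")
    case True then show ?thesis using ab by (simp add: gb_def qf_nz)
  next
    case False2: False
    then show ?thesis using False by (simp add: gb_def)
  qed
qed

definition tri :: "nat \<Rightarrow> nat" where "tri f = (\<Sum>i<f. i)"
lemma tri_Suc: "tri (Suc f) = tri f + f" by (simp add: tri_def)
lemma tri_0: "tri 0 = 0" by (simp add: tri_def)

definition PP :: "'a::field \<Rightarrow> 'a \<Rightarrow> nat \<Rightarrow> 'a \<Rightarrow> 'a fps" where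
  "PP a b j c = (\<Prod>i<j. 1 + fps_const (c * a ^ (j - 1 - i) * b ^ i) * fps_X)"

lemma PP_Suc: "PP a b (Suc j) c = (1 + fps_const (c * a ^ j) * fps_X) * PP a b j (c * b)"
  unfolding PP_def prod.lessThan_Suc_shift by (simp add: mult_ac)

lemma coeff_lin: "((1 + fps_const C * fps_X) * G) $ n = G $ n + C * (if n = 0 then 0 else G $ (n - 1))"
  for G :: "'a::comm_ring_1 fps"
proof -
  have "(1 + fps_const C * fps_X) * G = G + fps_const C * (fps_X * G)" by (simp add: algebra_simps)
  then show ?thesis by simp
qed
lemma coeff_lin': "((1 - fps_const C * fps_X) * G) $ n = G $ n - C * (if n = 0 then 0 else G $ (n - 1))"
  for G :: "'a::comm_ring_1 fps"
proof -
  have "(1 - fps_const C * fps_X) * G = G - fps_const C * (fps_X * G)" by (simp add: algebra_simps)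
  then show ?thesis by simp
qed
lemma coeff_lin'': "(G * (1 - fps_const C * fps_X)) $ n = G $ n - C * (if n = 0 then 0 else G $ (n - 1))"
  for G :: "'a::comm_ring_1 fps"
  by (simp add: coeff_lin' mult.commute[of G])

lemma gb_gt: "N < K \<Longrightarrow> gb a b N K = 0" by (simp add: gb_def)

lemma PP_nth: assumes ab: "ok a b" shows "PP a b j c $ f = c ^ f * (a * b) ^ tri f * gb a b j f"
proof (induct j arbitrary: c f)
  case 0
  show ?case by (cases f) (simp_all add: PP_def gb_def qf_0 tri_0)
next
  case (Suc j)
  show ?case
  proof (cases f)
    case 0 then show ?thesis by (simp add: PP_Suc coeff_lin Suc gb_0[OF ab] tri_0)
  next
    case (Suc f')
    have pas: "gb a b (Suc j) (Suc f') = b ^ Suc f' * gb a b j (Suc f') + a ^ (Suc j - Suc f') * gb a b j f'"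
      using gb_pascal[OF ab, of "Suc f'" j] by simp
    have second: "c * a ^ j * ((c * b) ^ f' * (a * b) ^ tri f' * gb a b j f') =
       c ^ Suc f' * (a * b) ^ tri (Suc f') * (a ^ (Suc j - Suc f') * gb a b j f')"
    proof (cases "f' \<le> j")
      case True
      have aj: "a ^ j = a ^ f' * a ^ (j - f')" using True by (simp flip: power_add)
      have t: "(a * b) ^ tri (Suc f') = (a * b) ^ tri f' * a ^ f' * b ^ f'"
        by (simp add: tri_Suc power_add power_mult_distrib)
      show ?thesis unfolding t aj by (simp add: power_mult_distrib mult_ac)
    next
      case False then show ?thesis by (simp add: gb_gt)
    qed
    have A: "PP a b j (c * b) $ Suc f' = c ^ Suc f' * (a * b) ^ tri (Suc f') * (b ^ Suc f' * gb a b j (Suc f'))"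
      by (simp add: Suc.hyps power_mult_distrib mult_ac)
    have B: "c * a ^ j * PP a b j (c * b) $ f' = c ^ Suc f' * (a * b) ^ tri (Suc f') * (a ^ (Suc j - Suc f') * gb a b j f')"
      using second by (simp add: Suc.hyps)
    show ?thesis unfolding Suc PP_Suc coeff_lin pas
      using A B by (simp add: distrib_left)
  qed
qed

definition AA :: "'a::field \<Rightarrow> 'a \<Rightarrow> nat \<Rightarrow> 'a \<Rightarrow> 'a fps" where
  "AA a b j c = Abs_fps (\<lambda>d. c ^ d * gb a b (j + d) d)"
definition QQ :: "'a::field \<Rightarrow> 'a \<Rightarrow> nat \<Rightarrow> 'a \<Rightarrow> 'a fps" where
  "QQ a b j c = (\<Prod>i<Suc j. 1 - fps_const (c * a ^ (j - i) * b ^ i) * fps_X)"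

lemma QQ_Suc: "QQ a b (Suc j) c = (1 - fps_const (c * a ^ Suc j) * fps_X) * QQ a b j (c * b)"
  unfolding QQ_def prod.lessThan_Suc_shift[of _ "Suc j"] by (simp add: mult_ac)

lemma AA_step: assumes ab: "ok a b"
  shows "AA a b (Suc j) c * (1 - fps_const (c * a ^ Suc j) * fps_X) = AA a b j (c * b)"
proof (rule fps_ext)
  fix d show "(AA a b (Suc j) c * (1 - fps_const (c * a ^ Suc j) * fps_X)) $ d = AA a b j (c * b) $ d"
  proof (cases d)
    case 0 then show ?thesis by (simp add: coeff_lin'' AA_def gb_0[OF ab])
  next
    case (Suc d')
    have pas: "gb a b (Suc (Suc (d' + j))) (Suc d') = b ^ Suc d' * gb a b (Suc (d' + j)) (Suc d') + a ^ (Suc j) * gb a b (Suc (d' + j)) d'"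
      using gb_pascal[OF ab, of "Suc d'" "Suc (d' + j)"] by simp
    show ?thesis unfolding Suc coeff_lin'' AA_def
      by (simp add: pas power_mult_distrib algebra_simps)
  qed
qed

lemma AA_QQ: assumes ab: "ok a b" shows "AA a b j c * QQ a b j c = 1"
proof (induct j arbitrary: c)
  case 0
  show ?case
  proof (rule fps_ext)
    fix n show "(AA a b 0 c * QQ a b 0 c) $ n = 1 $ n"
      by (cases n) (simp_all add: QQ_def AA_def coeff_lin'' gb_NN[OF ab])
  qed
next
  case (Suc j)
  have "AA a b (Suc j) c * QQ a b (Suc j) c = (AA a b (Suc j) c * (1 - fps_const (c * a ^ Suc j) * fps_X)) * QQ a b j (c * b)"
    by (simp add: QQ_Suc mult.assoc)
  also have "\<dots> = 1" by (simp only: AA_step[OF ab] Suc.hyps)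
  finally show ?case .
qed

lemma PP_QQ: "PP a b j (- b) * (1 - fps_const (a ^ j) * fps_X) = QQ a b j 1"
proof -
  have c: "fps_const (- b * a ^ (j - 1 - i) * b ^ i) = - fps_const (1 * a ^ (j - Suc i) * b ^ Suc i)" for i
    by (simp add: mult_ac)
  have t: "1 + fps_const (- b * a ^ (j - 1 - i) * b ^ i) * fps_X = 1 - fps_const (1 * a ^ (j - Suc i) * b ^ Suc i) * fps_X" for i
    unfolding c by (metis add_uminus_conv_diff mult_minus_left)
  have "PP a b j (- b) = (\<Prod>i<j. 1 - fps_const (1 * a ^ (j - Suc i) * b ^ Suc i) * fps_X)"
    unfolding PP_def t ..
  then show ?thesis unfolding QQ_def prod.lessThan_Suc_shift by (simp add: mult_ac)
qed

lemma vandermonde: assumes ab: "ok a b"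
  shows "(\<Sum>f=0..m. (- b) ^ f * (a * b) ^ tri f * gb a b j f * gb a b (j + (m - f)) (m - f)) = a ^ (j * m)"
proof -
  define H where "H = PP a b j (- b) * AA a b j 1"
  have H1: "H * (1 - fps_const (a ^ j) * fps_X) = 1"
    unfolding H_def using AA_QQ[OF ab, of j 1] PP_QQ[of a b j] by (simp add: mult_ac)
  have H0: "H $ 0 = 1" using arg_cong[OF H1, of "\<lambda>f. f $ 0"] by (simp add: coeff_lin'')
  have HS: "H $ Suc n = a ^ j * H $ n" for n using arg_cong[OF H1, of "\<lambda>f. f $ Suc n"] by (simp add: coeff_lin'')
  have Hm: "H $ m = a ^ (j * m)" by (induct m) (simp_all add: H0 HS power_add mult.commute)
  have "H $ m = (\<Sum>f=0..m. (- b) ^ f * (a * b) ^ tri f * gb a b j f * gb a b (j + (m - f)) (m - f))"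
    unfolding H_def fps_mult_nth by (simp add: PP_nth[OF ab] AA_def mult.assoc)
  then show ?thesis using Hm by simp
qed



definition FQ :: "Qq \<Rightarrow> Qq \<Rightarrow> nat \<Rightarrow> Qq" where "FQ e Q N = (\<Prod>i=1..N. qn e Q (int i))"

lemma qn_qq: "qn e Q (int i) = qq (e * Q) (inverse Q) i"
  by (simp add: qn_def qq_def power_int_minus power_inverse)

lemma FQ_qf: "FQ e Q N = qf (e * Q) (inverse Q) N"
  by (simp add: FQ_def qf_def qn_qq)

lemma ok_eQ: assumes e: "sgn1 e" and g: "gen Q" shows "ok (e * Q) (inverse Q)"
  unfolding ok_def
proof (intro allI impI)
  fix i :: nat assume "i > 0"
  then have "qq (e * Q) (inverse Q) i \<noteq> 0" using qn_nz[OF e g, of "int i"] by (simp add: qn_qq)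
  then show "(e * Q) ^ i \<noteq> inverse Q ^ i" by (auto simp: qq_def)
qed

lemma FQ_Suc: "FQ e Q (Suc N) = FQ e Q N * qn e Q (int (Suc N))"
  by (simp add: FQ_def)

lemma FQ_nz: "sgn1 e \<Longrightarrow> gen Q \<Longrightarrow> FQ e Q N \<noteq> 0"
  by (simp add: FQ_qf qf_nz ok_eQ)

lemma FQ_bar: assumes e: "sgn1 e" and g: "gen Q" shows "FQ e (inverse Q) N = e ^ tri N * FQ e Q N"
proof (induct N)
  case 0 then show ?case by (simp add: FQ_def tri_0)
next
  case (Suc N)
  have "qn e (inverse Q) (int (Suc N)) = e ^ N * qn e Q (int (Suc N))"
    using qn_bar[OF e g, of "int (Suc N)"] by (simp add: power_int_of_nat)
  then show ?case by (simp add: FQ_Suc Suc tri_Suc power_add mult_ac)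
qed

lemma e_tri_sq: "sgn1 e \<Longrightarrow> e ^ n * e ^ n = 1"
  by (simp add: sgn1_sq flip: power_mult_distrib)

lemma gamma_closed:
  assumes e: "sgn1 e" and g: "gen Q"
  shows "(\<Sum>d\<in>{d. m \<le> j + d \<and> d \<le> m}. (-Q)^d * FQ e Q (j+d) * FQ e (inverse Q) j
            / (FQ e Q (j + d - m) * FQ e Q d * FQ e Q j * FQ e (inverse Q) (m - d)))
         = (-Q)^m * Q^(j*m) * e^(tri j + j*m)"
proof -
  define a where "a = e * Q"
  define b where "b = inverse Q"
  have Q: "Q \<noteq> 0" using g by (simp add: gen_def)
  have ab: "ok a b" unfolding a_def b_def by (rule ok_eQ[OF e g])
  have abe: "a * b = e" using Q by (simp add: a_def b_def)
  have Qb: "(- Q) * (- b) = 1" using Q by (simp add: b_def)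
  let ?t = "\<lambda>d. (-Q)^d * FQ e Q (j+d) * FQ e (inverse Q) j
            / (FQ e Q (j + d - m) * FQ e Q d * FQ e Q j * FQ e (inverse Q) (m - d))"
  let ?v = "\<lambda>f. (- b) ^ f * (a * b) ^ tri f * gb a b j f * gb a b (j + (m - f)) (m - f)"
  have tm: "?t (m - f) = (-Q)^m * e ^ tri j * ?v f" if f: "f \<le> m" "f \<le> j" for f
  proof -
    have nz: "FQ e Q N \<noteq> 0" for N using FQ_nz[OF e g] .
    have g1: "gb a b (j + (m - f)) (m - f) = FQ e Q (j + (m - f)) / (FQ e Q (m - f) * FQ e Q j)"
      by (simp add: gb_def FQ_qf a_def b_def)
    have g2: "gb a b j f = FQ e Q j / (FQ e Q f * FQ e Q (j - f))"
      using f by (simp add: gb_def FQ_qf a_def b_def)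
    have i1: "j + (m - f) - m = j - f" "m - (m - f) = f" using f by simp_all
    have pw: "(-Q) ^ m = (-Q) ^ (m - f) * (-Q) ^ f" using f by (simp flip: power_add)
    have pw2: "(-Q) ^ f * (- b) ^ f = 1" using Q by (simp add: b_def flip: power_mult_distrib)
    have et: "e ^ tri f * e ^ tri f = 1" by (rule e_tri_sq[OF e])
    show ?thesis
      unfolding i1 FQ_bar[OF e g] g1 g2 abe pw
      using nz et pw2 sgn1_nz[OF e]
      by (simp add: field_simps power_mult_distrib)
  qed
  have "(\<Sum>d\<in>{d. m \<le> j + d \<and> d \<le> m}. ?t d) = (\<Sum>f\<in>{f. f \<le> m \<and> f \<le> j}. ?t (m - f))"
  proof (rule sum.reindex_bij_witness[of _ "\<lambda>d. m - d" "\<lambda>f. m - f"])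
  qed auto
  also have "\<dots> = (\<Sum>f\<in>{f. f \<le> m \<and> f \<le> j}. (-Q)^m * e ^ tri j * ?v f)"
    apply (rule sum.cong[OF refl])
    apply (rule tm)
     apply auto
    done
  also have "\<dots> = (\<Sum>f\<in>{0..m}. (-Q)^m * e ^ tri j * ?v f)"
    by (rule sum.mono_neutral_left) (auto simp: gb_gt)
  also have "\<dots> = (-Q)^m * e ^ tri j * a ^ (j * m)"
    by (subst sum_distrib_left[symmetric]) (simp only: vandermonde[OF ab])
  also have "\<dots> = (-Q)^m * Q^(j*m) * e^(tri j + j*m)"
    by (simp add: a_def power_add power_mult_distrib mult_ac)
  finally show ?thesis .
qed


lemma ql_add: "qlinear scal f \<Longrightarrow> f (x + y) = f x + f y" by (simp add: qlinear_def)
lemma ql_scal: "qlinear scal f \<Longrightarrow> f (scal c x) = scal c (f x)" by (simp add: qlinear_def)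
lemma ql_0: "qlinear scal f \<Longrightarrow> f 0 = 0"
  using ql_add[of scal f 0 0] by simp
lemma ql_minus: "qlinear scal f \<Longrightarrow> f (- x) = - f x"
proof -
  assume l: "qlinear scal f"
  have "f x + f (- x) = 0" using ql_add[OF l, of x "- x"] ql_0[OF l] by simp
  then show ?thesis by (simp add: eq_neg_iff_add_eq_0 add.commute)
qed
lemma ql_diff: "qlinear scal f \<Longrightarrow> f (x - y) = f x - f y"
  using ql_add[of scal f x "- y"] ql_minus[of scal f y] by simp
lemma ql_sum: "qlinear scal f \<Longrightarrow> f (sum g A) = (\<Sum>a\<in>A. f (g a))"
  by (induct A rule: infinite_finite_induct) (simp_all add: ql_0 ql_add)
lemma ql_comp: "qlinear scal f \<Longrightarrow> qlinear scal g \<Longrightarrow> qlinear scal (\<lambda>x. f (g x))"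
  by (simp add: qlinear_def)
lemma ql_id: "qlinear scal (\<lambda>x. x)" by (simp add: qlinear_def)
lemma ql_pow: "qlinear scal f \<Longrightarrow> qlinear scal (f ^^ n)"
proof (induct n)
  case 0 then show ?case by (simp add: qlinear_def)
next
  case (Suc n) then show ?case using ql_comp[of scal f "f ^^ n"] by (simp add: comp_def)
qed



lemma fsum_eq: assumes "finite B" "B \<subseteq> A" "\<And>a. a \<in> A \<Longrightarrow> a \<notin> B \<Longrightarrow> f a = 0"
  shows "fsum f A = sum f B"
  unfolding fsum_def
  by (rule sum.mono_neutral_left) (use assms in auto)

lemma fsum_finite: assumes "finite B" "\<And>a. a \<in> A \<Longrightarrow> a \<notin> B \<Longrightarrow> f a = 0"
  shows "finite {d\<in>A. f d \<noteq> 0}"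
  by (rule finite_subset[OF _ assms(1)]) (use assms(2) in auto)




definition gam :: "nat \<Rightarrow> nat \<Rightarrow> qpi" where
  "gam j m = (\<Sum>d\<in>{d. m \<le> j + d \<and> d \<le> m}. (- qv) ^ d * qinv (qfact (j + d - m)) * qinv (qfact d) * qinv (qfact j)
      * (\<Prod>i\<in>{m<..j+d}. sco (int (j + m)) i) * qfact m)"
definition gam' :: "nat \<Rightarrow> nat \<Rightarrow> qpi" where
  "gam' j m = (\<Sum>d\<in>{d. m \<le> j + d \<and> d \<le> m}. qinv (- qv) ^ d * qinv (qbar (qfact (j + d - m))) * qinv (qbar (qfact d))
      * qinv (qfact m) * (\<Prod>i\<in>{m - d<..m}. sco (int (j + m)) i) * qfact j)"

lemma qunit_qfact: "qunit (qfact d)"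
  unfolding qfact_def by (rule qunit_prod) (simp add: qunit_qint)


locale imod =
  fixes scal :: "qpi \<Rightarrow> 'v::ab_group_add \<Rightarrow> 'v" and P :: "int \<Rightarrow> 'v \<Rightarrow> 'v" and E F :: "'v \<Rightarrow> 'v"
  assumes integ: "integrable scal P E F"
begin

lemma UM: "Uqpi_module scal P E F" using integ by (simp add: integrable_def)

sublocale module scal using UM by (simp add: Uqpi_module_def)

lemma linP: "qlinear scal (P k)" using UM by (simp add: Uqpi_module_def)
lemma linE: "qlinear scal E" using UM by (simp add: Uqpi_module_def)
lemma linF: "qlinear scal F" using UM by (simp add: Uqpi_module_def)
lemma linEp: "qlinear scal (E ^^ n)" by (rule ql_pow[OF linE])
lemma linFp: "qlinear scal (F ^^ n)" by (rule ql_pow[OF linF])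

lemma PP_eq: "P k (P l v) = (if k = l then P k v else 0)" using UM by (simp add: Uqpi_module_def)
lemma decomp: "finite {k. P k v \<noteq> 0}" "v = (\<Sum>k\<in>{k. P k v \<noteq> 0}. P k v)"
  using UM by (simp_all add: Uqpi_module_def)
lemma EP: "E (P k v) = P (k + 2) (E v)" using UM by (simp add: Uqpi_module_def)
lemma FP: "F (P k v) = P (k - 2) (F v)" using UM by (simp add: Uqpi_module_def)
lemma relP: "E (F (P k v)) - scal piv (F (E (P k v))) = scal (qbar (qint k)) (P k v)"
  using UM unfolding Uqpi_module_def by blast

abbreviation W :: "int \<Rightarrow> 'v set" where "W k \<equiv> range (P k)"

lemma inW: "v \<in> W k \<longleftrightarrow> P k v = v"
  by (auto simp: PP_eq) (metis rangeI)
lemma W_P: "P k v \<in> W k" by simp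
lemma W_add: "x \<in> W k \<Longrightarrow> y \<in> W k \<Longrightarrow> x + y \<in> W k"
  by (simp add: inW ql_add[OF linP])
lemma W_scal: "x \<in> W k \<Longrightarrow> scal c x \<in> W k"
  by (simp add: inW ql_scal[OF linP])
lemma W_0: "0 \<in> W k" by (simp add: inW ql_0[OF linP])
lemma W_diff: "x \<in> W k \<Longrightarrow> y \<in> W k \<Longrightarrow> x - y \<in> W k"
  by (simp add: inW ql_diff[OF linP])
lemma W_sum: "(\<And>a. a \<in> A \<Longrightarrow> g a \<in> W k) \<Longrightarrow> sum g A \<in> W k"
  by (induct A rule: infinite_finite_induct) (simp_all add: W_0 W_add)
lemma P_other: "v \<in> W l \<Longrightarrow> k \<noteq> l \<Longrightarrow> P k v = 0"
  by (auto simp: PP_eq)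

lemma E_W: "v \<in> W k \<Longrightarrow> E v \<in> W (k + 2)"
  by (simp add: inW) (metis EP PP_eq)
lemma F_W: "v \<in> W k \<Longrightarrow> F v \<in> W (k - 2)"
  by (simp add: inW) (metis FP PP_eq)
lemma Ep_W: "v \<in> W k \<Longrightarrow> (E ^^ n) v \<in> W (k + 2 * int n)"
proof (induct n)
  case 0 then show ?case by simp
next
  case (Suc n) then show ?case using E_W[of "(E ^^ n) v" "k + 2 * int n"] by (simp add: algebra_simps)
qed
lemma Fp_W: "v \<in> W k \<Longrightarrow> (F ^^ n) v \<in> W (k - 2 * int n)"
proof (induct n)
  case 0 then show ?case by simp
next
  case (Suc n) then show ?case using F_W[of "(F ^^ n) v" "k - 2 * int n"] by (simp add: algebra_simps)
qed

lemma rel: "v \<in> W k \<Longrightarrow> E (F v) = scal piv (F (E v)) + scal (bq k) v"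
proof -
  assume v: "v \<in> W k"
  then have "E (F v) - scal piv (F (E v)) = scal (bq k) v" using relP[of k v] by (simp add: inW bq_def)
  then show ?thesis by (metis diff_eq_eq add.commute)
qed

lemma relFE: "v \<in> W k \<Longrightarrow> F (E v) = scal piv (E (F v)) - scal (piv * bq k) v"
proof -
  assume v: "v \<in> W k"
  have "scal piv (E (F v)) = scal (piv * piv) (F (E v)) + scal (piv * bq k) v"
    using rel[OF v] by (simp add: scale_right_distrib)
  then show ?thesis by (simp add: piv_sq)
qed

lemma nil: "v \<in> W k \<Longrightarrow> \<exists>n. \<forall>m\<ge>n. (E ^^ m) v = 0 \<and> (F ^^ m) v = 0"
  using integ by (simp add: integrable_def)

lemma nilE: "v \<in> W k \<Longrightarrow> \<exists>n. (E ^^ n) v = 0" using nil by blast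
lemma nilF: "v \<in> W k \<Longrightarrow> \<exists>n. (F ^^ n) v = 0" using nil by blast

lemma pow_zero_mono: "qlinear scal f \<Longrightarrow> (f ^^ n) v = 0 \<Longrightarrow> n \<le> m \<Longrightarrow> (f ^^ m) v = 0"
proof -
  assume l: "qlinear scal f" and h: "(f ^^ n) v = 0" and nm: "n \<le> m"
  obtain k where m: "m = k + n" using nm le_Suc_ex by (metis add.commute)
  have "(f ^^ m) v = (f ^^ k) ((f ^^ n) v)" by (simp add: m funpow_add)
  then show ?thesis using h ql_0[OF ql_pow[OF l]] by simp
qed

end
context imod begin

lemma K1: assumes x: "x \<in> W \<mu>" and Ex: "E x = 0"
  shows "E ((F ^^ Suc m) x) = scal (sco \<mu> (Suc m)) ((F ^^ m) x)"
proof (induct m)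
  case 0
  show ?case using rel[OF x] Ex by (simp add: ql_0[OF linF] sco_1[unfolded One_nat_def])
next
  case (Suc m)
  let ?w = "(F ^^ Suc m) x"
  have w: "?w \<in> W (\<mu> - 2 * int (Suc m))" using Fp_W[OF x] .
  have "E ((F ^^ Suc (Suc m)) x) = E (F ?w)" by simp
  also have "\<dots> = scal piv (F (E ?w)) + scal (bq (\<mu> - 2 * int (Suc m))) ?w" by (rule rel[OF w])
  also have "\<dots> = scal (piv * sco \<mu> (Suc m) + bq (\<mu> - 2 * int (Suc m))) ?w"
    using Suc by (simp add: ql_scal[OF linF] scale_left_distrib)
  also have "\<dots> = scal (sco \<mu> (Suc (Suc m))) ?w" by (simp only: sco_step)
  finally show ?case .
qed

lemma K2: assumes y: "y \<in> W \<mu>" and Fy: "F y = 0"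
  shows "F ((E ^^ Suc m) y) = scal (tco \<mu> (Suc m)) ((E ^^ m) y)"
proof (induct m)
  case 0
  show ?case using relFE[OF y] Fy by (simp add: ql_0[OF linE] tco_1[unfolded One_nat_def])
next
  case (Suc m)
  let ?w = "(E ^^ Suc m) y"
  have w: "?w \<in> W (\<mu> + 2 * int (Suc m))" using Ep_W[OF y] .
  have "F ((E ^^ Suc (Suc m)) y) = F (E ?w)" by simp
  also have "\<dots> = scal piv (E (F ?w)) - scal (piv * bq (\<mu> + 2 * int (Suc m))) ?w" by (rule relFE[OF w])
  also have "\<dots> = scal (piv * tco \<mu> (Suc m) - piv * bq (\<mu> + 2 * int (Suc m))) ?w"
    using Suc by (simp add: ql_scal[OF linE] scale_left_diff_distrib)
  also have "\<dots> = scal (tco \<mu> (Suc (Suc m))) ?w" by (simp only: tco_step)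
  finally show ?case .
qed

lemma scal_unit_cancel: "qunit c \<Longrightarrow> scal c y = 0 \<Longrightarrow> y = 0"
proof -
  assume c: "qunit c" and h: "scal c y = 0"
  have "y = scal (qinv c * c) y" using qinv_left[OF c] by simp
  also have "\<dots> = scal (qinv c) (scal c y)" by simp
  finally show "y = 0" using h by simp
qed

lemma vanish:
  assumes lX: "qlinear scal X" and lY: "qlinear scal Y"
    and step: "\<And>m. X ((Y ^^ Suc m) v) = scal (c (Suc m)) ((Y ^^ m) v)"
    and nilY: "(Y ^^ N) v = 0"
    and units: "\<And>m. 1 \<le> m \<Longrightarrow> m \<noteq> K \<Longrightarrow> qunit (c m)"
  shows "(Y ^^ K) v = 0"
proof (rule ccontr)
  assume nz: "(Y ^^ K) v \<noteq> 0"
  define N0 where "N0 = (LEAST n. (Y ^^ n) v = 0)"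
  have N0: "(Y ^^ N0) v = 0" unfolding N0_def by (rule LeastI[of _ N], rule nilY)
  have N0K: "K < N0"
  proof (rule ccontr)
    assume "\<not> K < N0"
    then have "N0 \<le> K" by simp
    then have "(Y ^^ K) v = 0" using pow_zero_mono[OF lY N0] by blast
    then show False using nz by simp
  qed
  then obtain M where M: "N0 = Suc M" by (cases N0) auto
  have YM: "(Y ^^ M) v \<noteq> 0"
  proof
    assume "(Y ^^ M) v = 0"
    then have "N0 \<le> M" unfolding N0_def by (rule Least_le)
    then show False using M by simp
  qed
  have "scal (c (Suc M)) ((Y ^^ M) v) = 0" using step[of M] N0 M ql_0[OF lX] by simp
  moreover have "qunit (c (Suc M))" using units[of "Suc M"] N0K M by simp
  ultimately show False using scal_unit_cancel YM by blast
qed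

lemma qunit_sco: "m \<noteq> 0 \<Longrightarrow> \<mu> - int m + 1 \<noteq> 0 \<Longrightarrow> qunit (sco \<mu> m)"
  by (simp add: sco_def qunit_mult qunit_qint qunit_bq)
lemma qunit_tco: "m \<noteq> 0 \<Longrightarrow> \<mu> + int m - 1 \<noteq> 0 \<Longrightarrow> qunit (tco \<mu> m)"
  by (simp add: tco_def qunit_mult qunit_qint qunit_bq qunit_minus qunit_power qunit_piv)

lemma prim_top: assumes x: "x \<in> W (int n)" and Ex: "E x = 0" shows "(F ^^ Suc n) x = 0"
proof -
  obtain N where N: "(F ^^ N) x = 0" using nilF[OF x] by blast
  show ?thesis
    by (rule vanish[OF linE linF K1[OF x Ex] N]) (simp add: qunit_sco)
qed

lemma prim_neg: assumes x: "x \<in> W \<mu>" and Ex: "E x = 0" and neg: "\<mu> < 0" shows "x = 0"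
proof -
  obtain N where N: "(F ^^ N) x = 0" using nilF[OF x] by blast
  have "(F ^^ 0) x = 0"
    by (rule vanish[OF linE linF K1[OF x Ex] N]) (use neg in \<open>simp add: qunit_sco\<close>)
  then show ?thesis by simp
qed

lemma low_top: assumes y: "y \<in> W (- int n)" and Fy: "F y = 0" shows "(E ^^ Suc n) y = 0"
proof -
  obtain N where N: "(E ^^ N) y = 0" using nilE[OF y] by blast
  show ?thesis
    by (rule vanish[OF linF linE K2[OF y Fy] N]) (simp add: qunit_tco)
qed

lemma low_pos: assumes y: "y \<in> W \<mu>" and Fy: "F y = 0" and pos: "\<mu> > 0" shows "y = 0"
proof -
  obtain N where N: "(E ^^ N) y = 0" using nilE[OF y] by blast
  have "(E ^^ 0) y = 0"
    by (rule vanish[OF linF linE K2[OF y Fy] N]) (use pos in \<open>simp add: qunit_tco\<close>)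
  then show ?thesis by simp
qed

end
context imod begin

lemma decomp_gen:
  fixes X Y :: "'v \<Rightarrow> 'v" and \<delta> :: int and c :: "int \<Rightarrow> nat \<Rightarrow> qpi" and S :: "int set"
  assumes lX: "qlinear scal X" and lY: "qlinear scal Y"
    and XW: "\<And>v k. v \<in> W k \<Longrightarrow> X v \<in> W (k + \<delta>)"
    and YW: "\<And>v k. v \<in> W k \<Longrightarrow> Y v \<in> W (k - \<delta>)"
    and step: "\<And>\<mu> x m. x \<in> W \<mu> \<Longrightarrow> X x = 0 \<Longrightarrow> X ((Y ^^ Suc m) x) = scal (c \<mu> (Suc m)) ((Y ^^ m) x)"
    and nilX: "\<And>v k. v \<in> W k \<Longrightarrow> \<exists>n. (X ^^ n) v = 0"
    and Scl: "\<And>l. l \<in> S \<Longrightarrow> l + \<delta> \<in> S"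
    and units: "\<And>l j. l \<in> S \<Longrightarrow> qunit (c (l + \<delta> + int j * \<delta>) (Suc j))"
    and lS: "l \<in> S" and v: "v \<in> W l"
  shows "\<exists>N xs. v = (\<Sum>j<N. (Y ^^ j) (xs j)) \<and> (\<forall>j<N. xs j \<in> W (l + int j * \<delta>) \<and> X (xs j) = 0)"
proof -
  have YpW: "(Y ^^ n) w \<in> W (k - int n * \<delta>)" if "w \<in> W k" for w k n
    using that
  proof (induct n arbitrary: w k)
    case 0 then show ?case by simp
  next
    case (Suc n)
    have "Y w \<in> W (k - \<delta>)" using YW[OF Suc.prems] .
    from Suc.hyps[OF this] show ?case by (simp add: funpow_swap1 algebra_simps)
  qed
  obtain r where r: "(X ^^ r) v = 0" using nilX[OF v] by blast
  have main: "\<And>l v. l \<in> S \<Longrightarrow> v \<in> W l \<Longrightarrow> (X ^^ r) v = 0 \<Longrightarrow>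
     \<exists>N xs. v = (\<Sum>j<N. (Y ^^ j) (xs j)) \<and> (\<forall>j<N. xs j \<in> W (l + int j * \<delta>) \<and> X (xs j) = 0)"
  proof (induct r)
    case 0
    then show ?case by (intro exI[of _ 0]) simp
  next
    case (Suc r)
    note lS = Suc.prems(1) and v = Suc.prems(2)
    have u: "X v \<in> W (l + \<delta>)" using XW[OF v] .
    have ur: "(X ^^ r) (X v) = 0" using Suc.prems(3) by (simp add: funpow_swap1)
    obtain N ys where ys: "X v = (\<Sum>j<N. (Y ^^ j) (ys j))"
      and ysW: "\<And>j. j < N \<Longrightarrow> ys j \<in> W (l + \<delta> + int j * \<delta>) \<and> X (ys j) = 0"
      using Suc.hyps[OF Scl[OF lS] u ur] by blast
    define xs where "xs j = (if j = 0 then v - (\<Sum>i<N. scal (qinv (c (l + \<delta> + int i * \<delta>) (Suc i))) ((Y ^^ Suc i) (ys i)))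
                          else scal (qinv (c (l + \<delta> + int (j - 1) * \<delta>) j)) (ys (j - 1)))" for j
    have Xterm: "X (scal (qinv (c (l + \<delta> + int i * \<delta>) (Suc i))) ((Y ^^ Suc i) (ys i))) = (Y ^^ i) (ys i)"
      if "i < N" for i
    proof -
      have "X ((Y ^^ Suc i) (ys i)) = scal (c (l + \<delta> + int i * \<delta>) (Suc i)) ((Y ^^ i) (ys i))"
        using step ysW[OF that] by blast
      then show ?thesis using qinv_left[OF units[OF lS, of i]] by (simp add: ql_scal[OF lX])
    qed
    have S: "(\<Sum>i<N. X (scal (qinv (c (l + \<delta> + int i * \<delta>) (Suc i))) ((Y ^^ Suc i) (ys i)))) = (\<Sum>i<N. (Y ^^ i) (ys i))"
      by (rule sum.cong[OF refl], rule Xterm, simp)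
    have x0def: "xs 0 = v - (\<Sum>i<N. scal (qinv (c (l + \<delta> + int i * \<delta>) (Suc i))) ((Y ^^ Suc i) (ys i)))"
      unfolding xs_def by simp
    have xs0: "X (xs 0) = 0"
      unfolding x0def using ys by (simp only: ql_diff[OF lX] ql_sum[OF lX] S) simp
    have xs0W: "xs 0 \<in> W l"
    proof -
      have "(Y ^^ Suc i) (ys i) \<in> W l" if "i < N" for i
        using YpW[of "ys i" "l + \<delta> + int i * \<delta>" "Suc i"] ysW[OF that] by (simp add: algebra_simps)
      then show ?thesis unfolding xs_def by (auto intro!: W_diff[OF v] W_sum W_scal)
    qed
    have sumeq: "(\<Sum>j<Suc N. (Y ^^ j) (xs j)) = v"
    proof -
      have "(\<Sum>j<Suc N. (Y ^^ j) (xs j)) = xs 0 + (\<Sum>i<N. (Y ^^ Suc i) (xs (Suc i)))"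
        unfolding sum.lessThan_Suc_shift by simp
      also have "(\<Sum>i<N. (Y ^^ Suc i) (xs (Suc i))) = (\<Sum>i<N. scal (qinv (c (l + \<delta> + int i * \<delta>) (Suc i))) ((Y ^^ Suc i) (ys i)))"
        by (simp add: xs_def ql_scal[OF ql_pow[OF lY]] del: funpow.simps)
      finally show ?thesis by (simp add: xs_def)
    qed
    show ?case
    proof (intro exI conjI allI impI)
      show "v = (\<Sum>j<Suc N. (Y ^^ j) (xs j))" using sumeq by simp
    next
      fix j assume j: "j < Suc N"
      show "xs j \<in> W (l + int j * \<delta>)"
      proof (cases j)
        case 0 then show ?thesis using xs0W by simp
      next
        case (Suc i)
        then have "ys i \<in> W (l + \<delta> + int i * \<delta>)" using ysW j by simp
        then show ?thesis using Suc by (simp add: xs_def W_scal algebra_simps)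
      qed
      show "X (xs j) = 0"
      proof (cases j)
        case 0 then show ?thesis using xs0 by simp
      next
        case (Suc i)
        then show ?thesis using ysW[of i] j by (simp add: xs_def ql_scal[OF lX])
      qed
    qed
  qed
  show ?thesis by (rule main[OF lS v r])
qed

lemma Dplus: assumes l: "l \<ge> -1" and v: "v \<in> W l"
  shows "\<exists>N xs. v = (\<Sum>j<N. (F ^^ j) (xs j)) \<and> (\<forall>j<N. xs j \<in> W (l + int j * 2) \<and> E (xs j) = 0)"
proof (rule decomp_gen[OF linE linF E_W F_W K1 nilE, where S="{l. l \<ge> -1}" and l=l and v=v])
  show "\<And>l::int. l \<in> {l. - 1 \<le> l} \<Longrightarrow> l + 2 \<in> {l. - 1 \<le> l}" by simp
  show "\<And>(l::int) j. l \<in> {l. - 1 \<le> l} \<Longrightarrow> qunit (sco (l + 2 + int j * 2) (Suc j))"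
    by (rule qunit_sco) auto
qed (use l v in auto)

lemma Dminus: assumes l: "l \<le> 1" and v: "v \<in> W l"
  shows "\<exists>N xs. v = (\<Sum>j<N. (E ^^ j) (xs j)) \<and> (\<forall>j<N. xs j \<in> W (l + int j * (-2)) \<and> F (xs j) = 0)"
proof (rule decomp_gen[OF linF linE _ _ K2 nilF, where \<delta>="-2" and S="{l. l \<le> 1}" and l=l and v=v])
  show "\<And>v k. v \<in> W k \<Longrightarrow> F v \<in> W (k + - 2)" using F_W by simp
  show "\<And>v k. v \<in> W k \<Longrightarrow> E v \<in> W (k - - 2)" using E_W by simp
  show "\<And>l::int. l \<in> {l. l \<le> 1} \<Longrightarrow> l + - 2 \<in> {l. l \<le> 1}" by simp
  show "\<And>(l::int) j. l \<in> {l. l \<le> 1} \<Longrightarrow> qunit (tco (l + - 2 + int j * - 2) (Suc j))"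
    by (rule qunit_tco) auto
qed (use l v in auto)

end
context imod begin

definition termT :: "int \<Rightarrow> nat \<Rightarrow> 'v \<Rightarrow> 'v" where
  "termT k d v = scal ((- qv) ^ d) (divpow scal E (nat (k + int d)) (divpow scal F d v))"
definition termT' :: "int \<Rightarrow> nat \<Rightarrow> 'v \<Rightarrow> 'v" where
  "termT' k d v = scal (qinv (- qv) ^ d) (divpow_bar scal F (nat (k + int d)) (divpow_bar scal E d v))"
definition Tk :: "int \<Rightarrow> 'v \<Rightarrow> 'v" where
  "Tk k v = fsum (\<lambda>d. termT k d v) {d. int d \<ge> max 0 (- k)}"
definition Tk' :: "int \<Rightarrow> 'v \<Rightarrow> 'v" where
  "Tk' k v = fsum (\<lambda>d. termT' k d v) {d. int d \<ge> max 0 (- k)}"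

lemma ql_divpow: assumes "qlinear scal X" shows "qlinear scal (divpow scal X d)"
proof -
  have l: "qlinear scal (X ^^ d)" by (rule ql_pow[OF assms])
  show ?thesis by (simp add: qlinear_def divpow_def ql_add[OF l] ql_scal[OF l] scale_right_distrib mult.commute)
qed
lemma ql_divpow_bar: assumes "qlinear scal X" shows "qlinear scal (divpow_bar scal X d)"
proof -
  have l: "qlinear scal (X ^^ d)" by (rule ql_pow[OF assms])
  show ?thesis by (simp add: qlinear_def divpow_bar_def ql_add[OF l] ql_scal[OF l] scale_right_distrib mult.commute)
qed

lemma ql_termT: "qlinear scal (termT k d)"
  unfolding termT_def qlinear_def
  by (simp add: ql_add[OF ql_divpow[OF linE]] ql_add[OF ql_divpow[OF linF]]
       ql_scal[OF ql_divpow[OF linE]] ql_scal[OF ql_divpow[OF linF]] scale_right_distrib mult.commute)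
lemma ql_termT': "qlinear scal (termT' k d)"
  unfolding termT'_def qlinear_def
  by (simp add: ql_add[OF ql_divpow_bar[OF linE]] ql_add[OF ql_divpow_bar[OF linF]]
       ql_scal[OF ql_divpow_bar[OF linE]] ql_scal[OF ql_divpow_bar[OF linF]] scale_right_distrib mult.commute)

lemma termT_van: "(F ^^ N) v = 0 \<Longrightarrow> N \<le> d \<Longrightarrow> termT k d v = 0"
  unfolding termT_def divpow_def
  by (simp add: pow_zero_mono[OF linF] ql_0[OF linEp])
lemma termT'_van: "(E ^^ N) v = 0 \<Longrightarrow> N \<le> d \<Longrightarrow> termT' k d v = 0"
  unfolding termT'_def divpow_bar_def
  by (simp add: pow_zero_mono[OF linE] ql_0[OF linFp])

lemma Tk_sum: assumes "(F ^^ N) v = 0"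
  shows "Tk k v = (\<Sum>d\<in>{d. int d \<ge> max 0 (- k) \<and> d < N}. termT k d v)"
  unfolding Tk_def by (rule fsum_eq) (use termT_van[OF assms] in auto)
lemma Tk'_sum: assumes "(E ^^ N) v = 0"
  shows "Tk' k v = (\<Sum>d\<in>{d. int d \<ge> max 0 (- k) \<and> d < N}. termT' k d v)"
  unfolding Tk'_def by (rule fsum_eq) (use termT'_van[OF assms] in auto)

lemma Tk_fin: "(F ^^ N) v = 0 \<Longrightarrow> finite {d\<in>{d. int d \<ge> max 0 (- k)}. termT k d v \<noteq> 0}"
  by (rule fsum_finite[of "{..<N}"]) (auto intro: termT_van)
lemma Tk'_fin: "(E ^^ N) v = 0 \<Longrightarrow> finite {d\<in>{d. int d \<ge> max 0 (- k)}. termT' k d v \<noteq> 0}"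
  by (rule fsum_finite[of "{..<N}"]) (auto intro: termT'_van)

lemma Tk_add: assumes "(F ^^ N) v = 0" "(F ^^ N) w = 0" shows "Tk k (v + w) = Tk k v + Tk k w"
proof -
  have "(F ^^ N) (v + w) = 0" using assms by (simp add: ql_add[OF linFp])
  then show ?thesis using assms by (simp add: Tk_sum ql_add[OF ql_termT] sum.distrib)
qed
lemma Tk_scal: assumes "(F ^^ N) v = 0" shows "Tk k (scal c v) = scal c (Tk k v)"
proof -
  have "(F ^^ N) (scal c v) = 0" using assms by (simp add: ql_scal[OF linFp])
  then show ?thesis using assms by (simp add: Tk_sum ql_scal[OF ql_termT] scale_sum_right)
qed
lemma Tk_0: "Tk k 0 = 0"
  using Tk_sum[of 0 0 k] by simp
lemma Tk'_add: assumes "(E ^^ N) v = 0" "(E ^^ N) w = 0" shows "Tk' k (v + w) = Tk' k v + Tk' k w"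
proof -
  have "(E ^^ N) (v + w) = 0" using assms by (simp add: ql_add[OF linEp])
  then show ?thesis using assms by (simp add: Tk'_sum ql_add[OF ql_termT'] sum.distrib)
qed
lemma Tk'_scal: assumes "(E ^^ N) v = 0" shows "Tk' k (scal c v) = scal c (Tk' k v)"
proof -
  have "(E ^^ N) (scal c v) = 0" using assms by (simp add: ql_scal[OF linEp])
  then show ?thesis using assms by (simp add: Tk'_sum ql_scal[OF ql_termT'] scale_sum_right)
qed
lemma Tk'_0: "Tk' k 0 = 0"
  using Tk'_sum[of 0 0 k] by simp


lemma dpF_W: "v \<in> W \<mu> \<Longrightarrow> divpow scal F d v \<in> W (\<mu> - 2 * int d)"
  by (simp add: divpow_def W_scal Fp_W)
lemma dpE_W: "v \<in> W \<mu> \<Longrightarrow> divpow scal E d v \<in> W (\<mu> + 2 * int d)"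
  by (simp add: divpow_def W_scal Ep_W)
lemma dpbF_W: "v \<in> W \<mu> \<Longrightarrow> divpow_bar scal F d v \<in> W (\<mu> - 2 * int d)"
  by (simp add: divpow_bar_def W_scal Fp_W)
lemma dpbE_W: "v \<in> W \<mu> \<Longrightarrow> divpow_bar scal E d v \<in> W (\<mu> + 2 * int d)"
  by (simp add: divpow_bar_def W_scal Ep_W)

lemma termT_W: assumes v: "v \<in> W (- k)" and d: "int d \<ge> - k" shows "termT k d v \<in> W k"
proof -
  have "divpow scal E (nat (k + int d)) (divpow scal F d v) \<in> W (- k - 2 * int d + 2 * int (nat (k + int d)))"
    by (rule dpE_W[OF dpF_W[OF v]])
  then show ?thesis using d by (simp add: termT_def W_scal)
qed
lemma termT'_W: assumes v: "v \<in> W k" and d: "int d \<ge> - k" shows "termT' k d v \<in> W (- k)"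
proof -
  have "divpow_bar scal F (nat (k + int d)) (divpow_bar scal E d v) \<in> W (k + 2 * int d - 2 * int (nat (k + int d)))"
    by (rule dpbF_W[OF dpbE_W[OF v]])
  then show ?thesis using d by (simp add: termT'_def W_scal)
qed

lemma Tk_W: assumes v: "v \<in> W (- k)" shows "Tk k v \<in> W k"
proof -
  obtain N where N: "(F ^^ N) v = 0" using nilF[OF v] by blast
  show ?thesis unfolding Tk_sum[OF N] by (rule W_sum) (auto intro: termT_W[OF v])
qed
lemma Tk'_W: assumes v: "v \<in> W k" shows "Tk' k v \<in> W (- k)"
proof -
  obtain N where N: "(E ^^ N) v = 0" using nilE[OF v] by blast
  show ?thesis unfolding Tk'_sum[OF N] by (rule W_sum) (auto intro: termT'_W[OF v])
qed

lemma nilF2: "v \<in> W a \<Longrightarrow> w \<in> W b \<Longrightarrow> \<exists>N. (F ^^ N) v = 0 \<and> (F ^^ N) w = 0"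
proof -
  assume "v \<in> W a" "w \<in> W b"
  then obtain N1 N2 where "(F ^^ N1) v = 0" "(F ^^ N2) w = 0" using nilF by blast
  then show ?thesis using pow_zero_mono[OF linF, of N1 v "max N1 N2"] pow_zero_mono[OF linF, of N2 w "max N1 N2"] by auto
qed
lemma nilE2: "v \<in> W a \<Longrightarrow> w \<in> W b \<Longrightarrow> \<exists>N. (E ^^ N) v = 0 \<and> (E ^^ N) w = 0"
proof -
  assume "v \<in> W a" "w \<in> W b"
  then obtain N1 N2 where "(E ^^ N1) v = 0" "(E ^^ N2) w = 0" using nilE by blast
  then show ?thesis using pow_zero_mono[OF linE, of N1 v "max N1 N2"] pow_zero_mono[OF linE, of N2 w "max N1 N2"] by auto
qed

lemma TkW_add: "v \<in> W a \<Longrightarrow> w \<in> W b \<Longrightarrow> Tk k (v + w) = Tk k v + Tk k w"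
  using nilF2 Tk_add by blast
lemma TkW_scal: "v \<in> W a \<Longrightarrow> Tk k (scal c v) = scal c (Tk k v)"
  using nilF Tk_scal by blast
lemma Tk'W_add: "v \<in> W a \<Longrightarrow> w \<in> W b \<Longrightarrow> Tk' k (v + w) = Tk' k v + Tk' k w"
  using nilE2 Tk'_add by blast
lemma Tk'W_scal: "v \<in> W a \<Longrightarrow> Tk' k (scal c v) = scal c (Tk' k v)"
  using nilE Tk'_scal by blast

definition Tg :: "'v \<Rightarrow> 'v" where "Tg v = (\<Sum>\<mu>\<in>{\<mu>. P \<mu> v \<noteq> 0}. Tk (- \<mu>) (P \<mu> v))"
definition Tg' :: "'v \<Rightarrow> 'v" where "Tg' v = (\<Sum>\<mu>\<in>{\<mu>. P \<mu> v \<noteq> 0}. Tk' \<mu> (P \<mu> v))"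

lemma Tg_sum: assumes "finite A" "{\<mu>. P \<mu> v \<noteq> 0} \<subseteq> A" shows "Tg v = (\<Sum>\<mu>\<in>A. Tk (- \<mu>) (P \<mu> v))"
  unfolding Tg_def by (rule sum.mono_neutral_left) (use assms in \<open>auto simp: Tk_0\<close>)
lemma Tg'_sum: assumes "finite A" "{\<mu>. P \<mu> v \<noteq> 0} \<subseteq> A" shows "Tg' v = (\<Sum>\<mu>\<in>A. Tk' \<mu> (P \<mu> v))"
  unfolding Tg'_def by (rule sum.mono_neutral_left) (use assms in \<open>auto simp: Tk'_0\<close>)

lemma supp_W: "v \<in> W \<mu> \<Longrightarrow> {\<mu>'. P \<mu>' v \<noteq> 0} \<subseteq> {\<mu>}"
  using P_other by blast

lemma Tg_W: assumes "v \<in> W \<mu>" shows "Tg v = Tk (- \<mu>) v"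
  using Tg_sum[OF _ supp_W[OF assms]] assms by (simp add: inW)
lemma Tg'_W: assumes "v \<in> W \<mu>" shows "Tg' v = Tk' \<mu> v"
  using Tg'_sum[OF _ supp_W[OF assms]] assms by (simp add: inW)

lemma ql_Tg: "qlinear scal Tg"
  unfolding qlinear_def
proof (intro conjI allI)
  fix x y
  let ?A = "{\<mu>. P \<mu> x \<noteq> 0} \<union> {\<mu>. P \<mu> y \<noteq> 0} \<union> {\<mu>. P \<mu> (x + y) \<noteq> 0}"
  have fA: "finite ?A" using decomp(1) by blast
  have "Tg (x + y) = (\<Sum>\<mu>\<in>?A. Tk (- \<mu>) (P \<mu> (x + y)))" by (rule Tg_sum[OF fA]) blast
  also have "\<dots> = (\<Sum>\<mu>\<in>?A. Tk (- \<mu>) (P \<mu> x) + Tk (- \<mu>) (P \<mu> y))"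
    by (rule sum.cong[OF refl]) (simp add: ql_add[OF linP] TkW_add[OF W_P W_P])
  also have "\<dots> = Tg x + Tg y"
  proof -
    have tx: "Tg x = (\<Sum>\<mu>\<in>?A. Tk (- \<mu>) (P \<mu> x))" by (rule Tg_sum[OF fA]) blast
    have ty: "Tg y = (\<Sum>\<mu>\<in>?A. Tk (- \<mu>) (P \<mu> y))" by (rule Tg_sum[OF fA]) blast
    show ?thesis by (simp only: sum.distrib tx ty)
  qed
  finally show "Tg (x + y) = Tg x + Tg y" .
next
  fix c x
  let ?A = "{\<mu>. P \<mu> x \<noteq> 0} \<union> {\<mu>. P \<mu> (scal c x) \<noteq> 0}"
  have fA: "finite ?A" using decomp(1) by blast
  have "Tg (scal c x) = (\<Sum>\<mu>\<in>?A. Tk (- \<mu>) (P \<mu> (scal c x)))" by (rule Tg_sum[OF fA]) blast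
  also have "\<dots> = (\<Sum>\<mu>\<in>?A. scal c (Tk (- \<mu>) (P \<mu> x)))"
    by (rule sum.cong[OF refl]) (simp add: ql_scal[OF linP] TkW_scal[OF W_P])
  also have "\<dots> = scal c (Tg x)"
    by (simp add: scale_sum_right Tg_sum[OF fA, of x])
  finally show "Tg (scal c x) = scal c (Tg x)" .
qed

lemma ql_Tg': "qlinear scal Tg'"
  unfolding qlinear_def
proof (intro conjI allI)
  fix x y
  let ?A = "{\<mu>. P \<mu> x \<noteq> 0} \<union> {\<mu>. P \<mu> y \<noteq> 0} \<union> {\<mu>. P \<mu> (x + y) \<noteq> 0}"
  have fA: "finite ?A" using decomp(1) by blast
  have "Tg' (x + y) = (\<Sum>\<mu>\<in>?A. Tk' \<mu> (P \<mu> (x + y)))" by (rule Tg'_sum[OF fA]) blast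
  also have "\<dots> = (\<Sum>\<mu>\<in>?A. Tk' \<mu> (P \<mu> x) + Tk' \<mu> (P \<mu> y))"
    by (rule sum.cong[OF refl]) (simp add: ql_add[OF linP] Tk'W_add[OF W_P W_P])
  also have "\<dots> = Tg' x + Tg' y"
  proof -
    have tx: "Tg' x = (\<Sum>\<mu>\<in>?A. Tk' \<mu> (P \<mu> x))" by (rule Tg'_sum[OF fA]) blast
    have ty: "Tg' y = (\<Sum>\<mu>\<in>?A. Tk' \<mu> (P \<mu> y))" by (rule Tg'_sum[OF fA]) blast
    show ?thesis by (simp only: sum.distrib tx ty)
  qed
  finally show "Tg' (x + y) = Tg' x + Tg' y" .
next
  fix c x
  let ?A = "{\<mu>. P \<mu> x \<noteq> 0} \<union> {\<mu>. P \<mu> (scal c x) \<noteq> 0}"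
  have fA: "finite ?A" using decomp(1) by blast
  have "Tg' (scal c x) = (\<Sum>\<mu>\<in>?A. Tk' \<mu> (P \<mu> (scal c x)))" by (rule Tg'_sum[OF fA]) blast
  also have "\<dots> = (\<Sum>\<mu>\<in>?A. scal c (Tk' \<mu> (P \<mu> x)))"
    by (rule sum.cong[OF refl]) (simp add: ql_scal[OF linP] Tk'W_scal[OF W_P])
  also have "\<dots> = scal c (Tg' x)"
    by (simp add: scale_sum_right Tg'_sum[OF fA, of x])
  finally show "Tg' (scal c x) = scal c (Tg' x)" .
qed

end
context imod begin

lemma EpFp: assumes x: "x \<in> W \<mu>" and Ex: "E x = 0"
  shows "a \<le> N \<Longrightarrow> (E ^^ a) ((F ^^ N) x) = scal (\<Prod>i\<in>{N - a<..N}. sco \<mu> i) ((F ^^ (N - a)) x)"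
proof (induct a)
  case 0 then show ?case by simp
next
  case (Suc a)
  then have aN: "a < N" by simp
  have e: "N - a = Suc (N - Suc a)" using aN by simp
  have s: "{N - Suc a<..N} = insert (N - a) {N - a<..N}" using aN by auto
  have "(E ^^ Suc a) ((F ^^ N) x) = E (scal (\<Prod>i\<in>{N - a<..N}. sco \<mu> i) ((F ^^ (N - a)) x))"
    using Suc aN by simp
  also have "\<dots> = scal (\<Prod>i\<in>{N - a<..N}. sco \<mu> i) (scal (sco \<mu> (N - a)) ((F ^^ (N - Suc a)) x))"
    by (simp only: ql_scal[OF linE] e K1[OF x Ex])
  also have "\<dots> = scal (\<Prod>i\<in>{N - Suc a<..N}. sco \<mu> i) ((F ^^ (N - Suc a)) x)"
    by (simp add: s mult.commute)
  finally show ?case .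
qed

lemma EpFp_zero: assumes x: "x \<in> W \<mu>" and Ex: "E x = 0" and Na: "N < a"
  shows "(E ^^ a) ((F ^^ N) x) = 0"
proof -
  define r where "r = a - N - 1"
  have a: "a = Suc r + N" using Na by (simp add: r_def)
  have "(E ^^ a) ((F ^^ N) x) = (E ^^ Suc r) ((E ^^ N) ((F ^^ N) x))" by (simp only: a funpow_add o_apply)
  also have "\<dots> = (E ^^ Suc r) (scal (\<Prod>i\<in>{0<..N}. sco \<mu> i) x)"
    using EpFp[OF x Ex, of N N] by simp
  also have "\<dots> = (E ^^ r) (E (scal (\<Prod>i\<in>{0<..N}. sco \<mu> i) x))"
    by (simp only: funpow_Suc_right o_apply)
  also have "\<dots> = 0" by (simp add: ql_scal[OF linE] Ex ql_0[OF linEp])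
  finally show ?thesis .
qed

lemma F_qfact: "(F ^^ m) x = scal (qfact m) (divpow scal F m x)"
  by (simp add: divpow_def qinv_right[OF qunit_qfact])

lemma string_T: assumes x: "x \<in> W (int (j + m))" and Ex: "E x = 0"
  shows "Tk (int j - int m) (divpow scal F j x) = scal (gam j m) (divpow scal F m x)"
proof -
  let ?n = "int (j + m)" and ?k = "int j - int m" and ?v = "divpow scal F j x"
  have top: "(F ^^ Suc (j + m)) x = 0" using prim_top[OF x Ex] .
  have N: "(F ^^ Suc m) ?v = 0"
  proof -
    have "(F ^^ Suc m) ?v = scal (qinv (qfact j)) ((F ^^ Suc m) ((F ^^ j) x))"
      by (simp only: divpow_def ql_scal[OF linFp])
    also have "(F ^^ Suc m) ((F ^^ j) x) = (F ^^ (Suc m + j)) x" by (simp only: funpow_add o_apply)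
    also have "\<dots> = 0" using top by (simp add: add.commute)
    finally show ?thesis by simp
  qed
  have idx: "{d. int d \<ge> max 0 (- ?k) \<and> d < Suc m} = {d. m \<le> j + d \<and> d \<le> m}" by auto
  have tm: "termT ?k d ?v = scal ((- qv) ^ d * qinv (qfact (j + d - m)) * qinv (qfact d) * qinv (qfact j)
      * (\<Prod>i\<in>{m<..j+d}. sco ?n i) * qfact m) (divpow scal F m x)"
    if d: "m \<le> j + d" "d \<le> m" for d
  proof -
    have a: "nat (?k + int d) = j + d - m" using d by simp
    have dd: "divpow scal F d ?v = scal (qinv (qfact d) * qinv (qfact j)) ((F ^^ (d + j)) x)"
      by (simp add: divpow_def ql_scal[OF linFp] funpow_add)
    have ef: "(E ^^ (j + d - m)) ((F ^^ (d + j)) x) = scal (\<Prod>i\<in>{m<..j+d}. sco ?n i) ((F ^^ m) x)"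
      using EpFp[OF x Ex, of "j + d - m" "d + j"] d by (simp add: add.commute)
    have "termT ?k d ?v = scal ((- qv) ^ d) (scal (qinv (qfact (j + d - m))) ((E ^^ (j + d - m)) (scal (qinv (qfact d) * qinv (qfact j)) ((F ^^ (d + j)) x))))"
      unfolding termT_def a dd by (simp only: divpow_def)
    also have "\<dots> = scal ((- qv) ^ d * qinv (qfact (j + d - m)) * (qinv (qfact d) * qinv (qfact j)) * (\<Prod>i\<in>{m<..j+d}. sco ?n i)) ((F ^^ m) x)"
      by (simp only: ql_scal[OF linEp] ef scale_scale mult.assoc)
    also have "\<dots> = scal ((- qv) ^ d * qinv (qfact (j + d - m)) * (qinv (qfact d) * qinv (qfact j)) * (\<Prod>i\<in>{m<..j+d}. sco ?n i) * qfact m) (divpow scal F m x)"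
      by (subst F_qfact) (simp only: scale_scale)
    finally show ?thesis by (simp only: mult.assoc)
  qed
  have "Tk ?k ?v = (\<Sum>d\<in>{d. m \<le> j + d \<and> d \<le> m}. termT ?k d ?v)"
    using Tk_sum[OF N, of ?k] idx by simp
  also have "\<dots> = (\<Sum>d\<in>{d. m \<le> j + d \<and> d \<le> m}. scal ((- qv) ^ d * qinv (qfact (j + d - m)) * qinv (qfact d) * qinv (qfact j)
      * (\<Prod>i\<in>{m<..j+d}. sco ?n i) * qfact m) (divpow scal F m x))"
    by (rule sum.cong[OF refl]) (simp add: tm)
  also have "\<dots> = scal (gam j m) (divpow scal F m x)"
    by (simp add: gam_def scale_sum_left)
  finally show ?thesis .
qed

lemma string_T': assumes x: "x \<in> W (int (j + m))" and Ex: "E x = 0"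
  shows "Tk' (int j - int m) (divpow scal F m x) = scal (gam' j m) (divpow scal F j x)"
proof -
  let ?n = "int (j + m)" and ?k = "int j - int m" and ?w = "divpow scal F m x"
  have N: "(E ^^ Suc m) ?w = 0"
    unfolding divpow_def ql_scal[OF linEp] EpFp_zero[OF x Ex, of m "Suc m", OF lessI] by simp
  have idx: "{d. int d \<ge> max 0 (- ?k) \<and> d < Suc m} = {d. m \<le> j + d \<and> d \<le> m}" by auto
  have tm: "termT' ?k d ?w = scal (qinv (- qv) ^ d * qinv (qbar (qfact (j + d - m))) * qinv (qbar (qfact d))
      * qinv (qfact m) * (\<Prod>i\<in>{m - d<..m}. sco ?n i) * qfact j) (divpow scal F j x)"
    if d: "m \<le> j + d" "d \<le> m" for d
  proof -
    have a: "nat (?k + int d) = j + d - m" using d by simp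
    have ef: "(E ^^ d) ((F ^^ m) x) = scal (\<Prod>i\<in>{m - d<..m}. sco ?n i) ((F ^^ (m - d)) x)"
      using EpFp[OF x Ex, of d m] d by simp
    have ff: "(F ^^ (j + d - m)) ((F ^^ (m - d)) x) = (F ^^ j) x"
    proof -
      have "(F ^^ (j + d - m)) ((F ^^ (m - d)) x) = (F ^^ (j + d - m + (m - d))) x" by (simp only: funpow_add o_apply)
      also have "j + d - m + (m - d) = j" using d by simp
      finally show ?thesis .
    qed
    have "termT' ?k d ?w = scal (qinv (- qv) ^ d) (scal (qinv (qbar (qfact (j + d - m))))
        ((F ^^ (j + d - m)) (scal (qinv (qbar (qfact d))) ((E ^^ d) (scal (qinv (qfact m)) ((F ^^ m) x))))))"
      unfolding termT'_def a by (simp only: divpow_bar_def divpow_def)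
    also have "\<dots> = scal (qinv (- qv) ^ d * qinv (qbar (qfact (j + d - m))) * qinv (qbar (qfact d))
      * qinv (qfact m) * (\<Prod>i\<in>{m - d<..m}. sco ?n i)) ((F ^^ j) x)"
      by (simp only: ql_scal[OF linEp] ql_scal[OF linFp] ef ff scale_scale mult.assoc)
    also have "\<dots> = scal (qinv (- qv) ^ d * qinv (qbar (qfact (j + d - m))) * qinv (qbar (qfact d))
      * qinv (qfact m) * (\<Prod>i\<in>{m - d<..m}. sco ?n i) * qfact j) (divpow scal F j x)"
      by (subst F_qfact) (simp only: scale_scale)
    finally show ?thesis .
  qed
  have "Tk' ?k ?w = (\<Sum>d\<in>{d. m \<le> j + d \<and> d \<le> m}. termT' ?k d ?w)"
    using Tk'_sum[OF N, of ?k] idx by simp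
  also have "\<dots> = (\<Sum>d\<in>{d. m \<le> j + d \<and> d \<le> m}. scal (qinv (- qv) ^ d * qinv (qbar (qfact (j + d - m))) * qinv (qbar (qfact d))
      * qinv (qfact m) * (\<Prod>i\<in>{m - d<..m}. sco ?n i) * qfact j) (divpow scal F j x))"
    by (rule sum.cong[OF refl]) (simp add: tm)
  also have "\<dots> = scal (gam' j m) (divpow scal F j x)"
    by (simp add: gam'_def scale_sum_left)
  finally show ?thesis .
qed

end


lemma ce_qfact: "sgn1 e \<Longrightarrow> ce e (qfact N) = FQ e qQ N"
  by (simp add: qfact_def FQ_def ce_prod ce_qint)

lemma barQ_prod: "barQ (prod f A) = (\<Prod>a\<in>A. barQ (f a))"
  by (induct A rule: infinite_finite_induct) (simp_all add: barQ_1 barQ_mult)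

lemma ce_qbar_qfact: "sgn1 e \<Longrightarrow> ce e (qbar (qfact N)) = FQ e (inverse qQ) N"
  by (simp add: ce_qbar ce_qfact FQ_def barQ_prod barQ_qn barQ_qQ)

lemma qunit_bar_qfact: "qunit (qbar (qfact N))"
  unfolding qunit_def using FQ_nz[OF _ gen_inv[OF gen_qQ]] by (simp add: ce_qbar_qfact sgn1_def)

lemma ce_sco: "sgn1 e \<Longrightarrow> ce e (sco n i) = qn e qQ (int i) * qn e (inverse qQ) (n - int i + 1)"
  by (simp add: sco_def ce_mult ce_qint ce_bq qn_bar gen_qQ)

lemma FQ_split: "m \<le> N \<Longrightarrow> FQ e Q N = FQ e Q m * (\<Prod>i\<in>{m<..N}. qn e Q (int i))"
proof -
  assume mN: "m \<le> N"
  have "{1..N} = {1..m} \<union> {m<..N}" using mN by auto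
  then show ?thesis unfolding FQ_def by (simp add: prod.union_disjoint ivl_disj_int)
qed

lemma prodA: "sgn1 e \<Longrightarrow> gen Q \<Longrightarrow> m \<le> N \<Longrightarrow> (\<Prod>i\<in>{m<..N}. qn e Q (int i)) = FQ e Q N / FQ e Q m"
  using FQ_split[of m N e Q] FQ_nz[of e Q m] by (simp add: field_simps)

lemma prodB: assumes e: "sgn1 e" and g: "gen Q" and t: "t \<le> j"
  shows "(\<Prod>i\<in>{m<..m+t}. qn e Q (int (j + m) - int i + 1)) = FQ e Q j / FQ e Q (j - t)"
proof -
  have "(\<Prod>i\<in>{m<..m+t}. qn e Q (int (j + m) - int i + 1)) = (\<Prod>k\<in>{j - t<..j}. qn e Q (int k))"
    by (rule prod.reindex_bij_witness[of _ "\<lambda>k. j + m + 1 - k" "\<lambda>i. j + m + 1 - i"]) (use t in \<open>auto simp: algebra_simps\<close>)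
  also have "\<dots> = FQ e Q j / FQ e Q (j - t)" by (rule prodA[OF e g]) simp
  finally show ?thesis .
qed

lemma ce_gam: assumes e: "sgn1 e"
  shows "ce e (gam j m) = (\<Sum>d\<in>{d. m \<le> j + d \<and> d \<le> m}. (-qQ)^d * FQ e qQ (j+d) * FQ e (inverse qQ) j
            / (FQ e qQ (j + d - m) * FQ e qQ d * FQ e qQ j * FQ e (inverse qQ) (m - d)))"
  unfolding gam_def ce_sum
proof (rule sum.cong[OF refl])
  fix d assume "d \<in> {d. m \<le> j + d \<and> d \<le> m}"
  then have d: "m \<le> j + d" "d \<le> m" by auto
  let ?Q = "qQ" and ?Q' = "inverse qQ"
  have g: "gen ?Q" "gen ?Q'" by (simp_all add: gen_qQ gen_inv)
  have p1: "(\<Prod>i\<in>{m<..j+d}. qn e ?Q (int i)) = FQ e ?Q (j + d) / FQ e ?Q m" using d by (simp add: prodA[OF e g(1)])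
  have p2: "(\<Prod>i\<in>{m<..j+d}. qn e ?Q' (int j + int m - int i + 1)) = FQ e ?Q' j / FQ e ?Q' (m - d)"
    using prodB[OF e g(2), of "j + d - m" j m] d by simp
  have pr: "ce e (\<Prod>i\<in>{m<..j+d}. sco (int (j + m)) i) = FQ e ?Q (j + d) / FQ e ?Q m * (FQ e ?Q' j / FQ e ?Q' (m - d))"
    by (simp add: ce_prod[OF e] ce_sco[OF e] prod.distrib p1 p2)
  have nz: "FQ e ?Q N \<noteq> 0" "FQ e ?Q' N \<noteq> 0" for N using FQ_nz[OF e g(1)] FQ_nz[OF e g(2)] by auto
  show "ce e ((- qv) ^ d * qinv (qfact (j + d - m)) * qinv (qfact d) * qinv (qfact j) * (\<Prod>i\<in>{m<..j+d}. sco (int (j + m)) i) * qfact m)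
     = (-qQ)^d * FQ e qQ (j+d) * FQ e (inverse qQ) j / (FQ e qQ (j + d - m) * FQ e qQ d * FQ e qQ j * FQ e (inverse qQ) (m - d))"
    using nz by (simp only: ce_mult[OF e] pr) (simp add: ce_power[OF e] ce_minus ce_qv ce_qinv[OF qunit_qfact e] ce_qfact[OF e] field_simps)
qed

lemma ce_gam': assumes e: "sgn1 e"
  shows "ce e (gam' j m) = (\<Sum>d\<in>{d. m \<le> j + d \<and> d \<le> m}. (-inverse qQ)^d * FQ e (inverse qQ) (j+d) * FQ e (inverse (inverse qQ)) j
            / (FQ e (inverse qQ) (j + d - m) * FQ e (inverse qQ) d * FQ e (inverse qQ) j * FQ e (inverse (inverse qQ)) (m - d)))"
  unfolding gam'_def ce_sum
proof (rule sum.cong[OF refl])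
  fix d assume "d \<in> {d. m \<le> j + d \<and> d \<le> m}"
  then have d: "m \<le> j + d" "d \<le> m" by auto
  let ?Q = "qQ" and ?Q' = "inverse qQ"
  have g: "gen ?Q" "gen ?Q'" by (simp_all add: gen_qQ gen_inv)
  have p1: "(\<Prod>i\<in>{m - d<..m}. qn e ?Q (int i)) = FQ e ?Q m / FQ e ?Q (m - d)" using d by (simp add: prodA[OF e g(1)])
  have p2: "(\<Prod>i\<in>{m - d<..m}. qn e ?Q' (int j + int m - int i + 1)) = FQ e ?Q' (j + d) / FQ e ?Q' j"
  proof -
    have "(\<Prod>i\<in>{m - d<..m}. qn e ?Q' (int j + int m - int i + 1)) = (\<Prod>k\<in>{j<..j+d}. qn e ?Q' (int k))"
      by (rule prod.reindex_bij_witness[of _ "\<lambda>k. j + m + 1 - k" "\<lambda>i. j + m + 1 - i"]) (use d in \<open>auto simp: algebra_simps\<close>)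
    also have "\<dots> = FQ e ?Q' (j + d) / FQ e ?Q' j" by (rule prodA[OF e g(2)]) simp
    finally show ?thesis .
  qed
  have pr: "ce e (\<Prod>i\<in>{m - d<..m}. sco (int j + int m) i) = FQ e ?Q m / FQ e ?Q (m - d) * (FQ e ?Q' (j + d) / FQ e ?Q' j)"
    by (simp add: ce_prod[OF e] ce_sco[OF e] prod.distrib p1 p2)
  have nz: "FQ e ?Q N \<noteq> 0" "FQ e ?Q' N \<noteq> 0" for N using FQ_nz[OF e g(1)] FQ_nz[OF e g(2)] by auto
  have cq: "ce e (qinv (- qv)) = inverse (- qQ)" using ce_qinv[OF qunit_minus[OF qunit_qv] e] by (simp add: ce_minus ce_qv)
  show "ce e (qinv (- qv) ^ d * qinv (qbar (qfact (j + d - m))) * qinv (qbar (qfact d)) * qinv (qfact m) * (\<Prod>i\<in>{m - d<..m}. sco (int (j + m)) i) * qfact j)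
     = (-inverse qQ)^d * FQ e (inverse qQ) (j+d) * FQ e (inverse (inverse qQ)) j
            / (FQ e (inverse qQ) (j + d - m) * FQ e (inverse qQ) d * FQ e (inverse qQ) j * FQ e (inverse (inverse qQ)) (m - d))"
    using nz by (simp add: ce_mult[OF e] ce_power[OF e] cq ce_qinv[OF qunit_qfact e] ce_qinv[OF qunit_bar_qfact e]
       ce_qfact[OF e] ce_qbar_qfact[OF e] pr field_simps)
qed

lemma gam_inv: "gam j m * gam' j m = 1"
proof (rule qpi_eqI)
  have *: "ce e (gam j m * gam' j m) = 1" if e: "sgn1 e" for e
  proof -
    have g: "gen qQ" "gen (inverse qQ)" by (simp_all add: gen_qQ gen_inv)
    have Q: "qQ \<noteq> 0" by (rule qQ_nz)
    have "ce e (gam j m * gam' j m) = ((-qQ)^m * qQ^(j*m) * e^(tri j + j*m)) * ((-inverse qQ)^m * (inverse qQ)^(j*m) * e^(tri j + j*m))"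
      using gamma_closed[OF e g(1), where m=m and j=j] gamma_closed[OF e g(2), where m=m and j=j]
      by (simp add: ce_mult[OF e] ce_gam[OF e] ce_gam'[OF e])
    also have "\<dots> = ((-qQ) * (-inverse qQ))^m * (qQ * inverse qQ)^(j*m) * (e^(tri j + j*m) * e^(tri j + j*m))"
      by (simp only: power_mult_distrib mult_ac)
    also have "\<dots> = 1" using Q e_tri_sq[OF e] by simp
    finally show ?thesis .
  qed
  show "ce 1 (gam j m * gam' j m) = ce 1 1" "ce (-1) (gam j m * gam' j m) = ce (-1) 1"
    using *[of 1] *[of "-1"] by (simp_all add: sgn1_def ce_1)
qed

context imod begin

definition Z :: "'v set" where "Z = {v. Tg' (Tg v) = v \<and> Tg (Tg' v) = v}"

lemma Z_add: "x \<in> Z \<Longrightarrow> y \<in> Z \<Longrightarrow> x + y \<in> Z"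
  by (simp add: Z_def ql_add[OF ql_Tg] ql_add[OF ql_Tg'])
lemma Z_scal: "x \<in> Z \<Longrightarrow> scal c x \<in> Z"
  by (simp add: Z_def ql_scal[OF ql_Tg] ql_scal[OF ql_Tg'])
lemma Z_0: "0 \<in> Z"
  by (simp add: Z_def ql_0[OF ql_Tg] ql_0[OF ql_Tg'])
lemma Z_sum: "(\<And>a. a \<in> A \<Longrightarrow> g a \<in> Z) \<Longrightarrow> sum g A \<in> Z"
  by (induct A rule: infinite_finite_induct) (simp_all add: Z_0 Z_add)

lemma Z_string: assumes x: "x \<in> W (int n)" and Ex: "E x = 0"
  shows "divpow scal F j x \<in> Z"
proof (cases "j \<le> n")
  case False
  have "(F ^^ j) x = 0" using pow_zero_mono[OF linF prim_top[OF x Ex]] False by simp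
  then have "divpow scal F j x = 0" by (simp add: divpow_def)
  then show ?thesis by (simp add: Z_0)
next
  case True
  define m where "m = n - j"
  have n: "n = j + m" using True by (simp add: m_def)
  have x': "x \<in> W (int (j + m))" using x n by simp
  have x'': "x \<in> W (int (m + j))" using x n by (simp add: add.commute)
  have vW: "divpow scal F j x \<in> W (int m - int j)" using dpF_W[OF x', of j] by simp
  have wW: "divpow scal F m x \<in> W (int j - int m)" using dpF_W[OF x', of m] by simp
  have T1: "Tg (divpow scal F j x) = scal (gam j m) (divpow scal F m x)"
    using Tg_W[OF vW] string_T[OF x' Ex] by simp
  have T1': "Tg' (divpow scal F m x) = scal (gam' j m) (divpow scal F j x)"
    using Tg'_W[OF wW] string_T'[OF x' Ex] by simp
  have T2': "Tg' (divpow scal F j x) = scal (gam' m j) (divpow scal F m x)"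
    using Tg'_W[OF vW] string_T'[OF x'' Ex] by simp
  have T2: "Tg (divpow scal F m x) = scal (gam m j) (divpow scal F j x)"
    using Tg_W[OF wW] string_T[OF x'' Ex] by simp
  show ?thesis unfolding Z_def
    by (simp add: T1 T1' T2 T2' ql_scal[OF ql_Tg] ql_scal[OF ql_Tg'] gam_inv mult.commute[of "gam' _ _"])
qed

lemma Z_Fprim: assumes x: "x \<in> W \<mu>" and Ex: "E x = 0" shows "(F ^^ j) x \<in> Z"
proof (cases "\<mu> < 0")
  case True
  then have "x = 0" using prim_neg[OF x Ex] by simp
  then show ?thesis by (simp add: ql_0[OF linFp] Z_0)
next
  case False
  then obtain n where "\<mu> = int n" by (metis nonneg_int_cases not_less)
  then have x': "x \<in> W (int n)" using x by simp
  show ?thesis unfolding F_qfact by (rule Z_scal[OF Z_string[OF x' Ex]])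
qed

lemma FpEp: assumes y: "y \<in> W \<mu>" and Fy: "F y = 0"
  shows "a \<le> N \<Longrightarrow> (F ^^ a) ((E ^^ N) y) = scal (\<Prod>i\<in>{N - a<..N}. tco \<mu> i) ((E ^^ (N - a)) y)"
proof (induct a)
  case 0 then show ?case by simp
next
  case (Suc a)
  then have aN: "a < N" by simp
  have e: "N - a = Suc (N - Suc a)" using aN by simp
  have s: "{N - Suc a<..N} = insert (N - a) {N - a<..N}" using aN by auto
  have "(F ^^ Suc a) ((E ^^ N) y) = F (scal (\<Prod>i\<in>{N - a<..N}. tco \<mu> i) ((E ^^ (N - a)) y))"
    using Suc aN by simp
  also have "\<dots> = scal (\<Prod>i\<in>{N - a<..N}. tco \<mu> i) (scal (tco \<mu> (N - a)) ((E ^^ (N - Suc a)) y))"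
    by (simp only: ql_scal[OF linF] e K2[OF y Fy])
  also have "\<dots> = scal (\<Prod>i\<in>{N - Suc a<..N}. tco \<mu> i) ((E ^^ (N - Suc a)) y)"
    by (simp add: s mult.commute)
  finally show ?case .
qed

lemma Z_Elow: assumes y: "y \<in> W \<mu>" and Fy: "F y = 0" shows "(E ^^ j) y \<in> Z"
proof (cases "\<mu> > 0")
  case True
  then have "y = 0" using low_pos[OF y Fy] by simp
  then show ?thesis by (simp add: ql_0[OF linEp] Z_0)
next
  case False
  then obtain n where mu: "\<mu> = - int n" by (metis nonpos_int_cases not_less)
  then have y': "y \<in> W (- int n)" using y by simp
  have top: "(E ^^ Suc n) y = 0" by (rule low_top[OF y' Fy])
  show ?thesis
  proof (cases "j \<le> n")
    case False
    then have "(E ^^ j) y = 0" using pow_zero_mono[OF linE top] by simp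
    then show ?thesis by (simp add: Z_0)
  next
    case True
    let ?x = "(E ^^ n) y"
    have xW: "?x \<in> W (int n)" using Ep_W[OF y', of n] by simp
    have Ex: "E ?x = 0" using top by simp
    let ?c = "\<Prod>i\<in>{j<..n}. tco \<mu> i"
    have fe: "(F ^^ (n - j)) ?x = scal ?c ((E ^^ j) y)"
      using FpEp[OF y Fy, of "n - j" n] True by simp
    have cu: "qunit ?c" by (rule qunit_prod) (use mu in \<open>auto intro!: qunit_tco\<close>)
    have "(E ^^ j) y = scal (qinv ?c) ((F ^^ (n - j)) ?x)"
      using fe qinv_left[OF cu] by simp
    then show ?thesis using Z_scal[OF Z_Fprim[OF xW Ex]] by simp
  qed
qed

lemma Z_W: assumes v: "v \<in> W l" shows "v \<in> Z"
proof (cases "l \<ge> -1")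
  case True
  obtain N xs where v: "v = (\<Sum>j<N. (F ^^ j) (xs j))" and xs: "\<forall>j<N. xs j \<in> W (l + int j * 2) \<and> E (xs j) = 0"
    using Dplus[OF True v] by blast
  show ?thesis unfolding v by (rule Z_sum) (use xs Z_Fprim in blast)
next
  case False
  then have l: "l \<le> 1" by simp
  obtain N xs where v: "v = (\<Sum>j<N. (E ^^ j) (xs j))" and xs: "\<forall>j<N. xs j \<in> W (l + int j * (-2)) \<and> F (xs j) = 0"
    using Dminus[OF l v] by blast
  show ?thesis unfolding v by (rule Z_sum) (use xs Z_Elow in blast)
qed

lemma Z_all: "v \<in> Z"
proof -
  have "v = (\<Sum>k\<in>{k. P k v \<noteq> 0}. P k v)" by (rule decomp(2))
  also have "\<dots> \<in> Z" by (rule Z_sum) (rule Z_W[OF W_P])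
  finally show ?thesis .
qed

lemma TT': "Tg' (Tg v) = v" "Tg (Tg' v) = v" using Z_all[of v] by (simp_all add: Z_def)

end


context imod begin

lemma final_part:
  shows "\<exists>T. qlinear scal T \<and> bij T \<and>
     (\<forall>k. T ` range (P (- k)) = range (P k)) \<and>
     (\<forall>k. \<forall>v\<in>range (P (- k)).
        finite {d. int d \<ge> max 0 (- k) \<and> scal ((- qv) ^ d) (divpow scal E (nat (k + int d)) (divpow scal F d v)) \<noteq> 0} \<and>
        T v = fsum (\<lambda>d. scal ((- qv) ^ d) (divpow scal E (nat (k + int d)) (divpow scal F d v)))
                   {d. int d \<ge> max 0 (- k)}) \<and>
     (\<forall>k. \<forall>v\<in>range (P k).
        finite {d. int d \<ge> max 0 (- k) \<and> scal (qinv (- qv) ^ d) (divpow_bar scal F (nat (k + int d)) (divpow_bar scal E d v)) \<noteq> 0} \<and>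
        inv T v = fsum (\<lambda>d. scal (qinv (- qv) ^ d) (divpow_bar scal F (nat (k + int d)) (divpow_bar scal E d v)))
                   {d. int d \<ge> max 0 (- k)})"
proof (intro exI conjI allI ballI)
  have c1: "Tg' \<circ> Tg = id" "Tg \<circ> Tg' = id" using TT' by (auto simp: fun_eq_iff)
  show "qlinear scal Tg" by (rule ql_Tg)
  show b: "bij Tg" using c1 by (rule o_bij)
  fix k
  show "Tg ` range (P (- k)) = range (P k)"
  proof
    show "Tg ` range (P (- k)) \<subseteq> range (P k)"
      using Tg_W Tk_W by auto
  next
    show "range (P k) \<subseteq> Tg ` range (P (- k))"
    proof
      fix w assume w: "w \<in> range (P k)"
      have "Tg' w \<in> W (- k)" using Tg'_W[OF w] Tk'_W[OF w] by simp
      moreover have "w = Tg (Tg' w)" using TT' by simp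
      ultimately show "w \<in> Tg ` range (P (- k))" by blast
    qed
  qed
next
  fix k v assume v: "v \<in> range (P (- k))"
  obtain N where N: "(F ^^ N) v = 0" using nilF[OF v] by blast
  show "finite {d. int d \<ge> max 0 (- k) \<and> scal ((- qv) ^ d) (divpow scal E (nat (k + int d)) (divpow scal F d v)) \<noteq> 0}"
    using Tk_fin[OF N, of k] by (simp add: termT_def)
  show "Tg v = fsum (\<lambda>d. scal ((- qv) ^ d) (divpow scal E (nat (k + int d)) (divpow scal F d v))) {d. int d \<ge> max 0 (- k)}"
    using Tg_W[OF v] by (simp add: Tk_def termT_def)
next
  fix k v assume v: "v \<in> range (P k)"
  have c1: "Tg' \<circ> Tg = id" "Tg \<circ> Tg' = id" using TT' by (auto simp: fun_eq_iff)
  have iv: "inv Tg = Tg'" by (rule inv_unique_comp[OF c1(2) c1(1)])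
  obtain N where N: "(E ^^ N) v = 0" using nilE[OF v] by blast
  show "finite {d. int d \<ge> max 0 (- k) \<and> scal (qinv (- qv) ^ d) (divpow_bar scal F (nat (k + int d)) (divpow_bar scal E d v)) \<noteq> 0}"
    using Tk'_fin[OF N, of k] by (simp add: termT'_def)
  show "inv Tg v = fsum (\<lambda>d. scal (qinv (- qv) ^ d) (divpow_bar scal F (nat (k + int d)) (divpow_bar scal E d v))) {d. int d \<ge> max 0 (- k)}"
    using Tg'_W[OF v] iv by (simp add: Tk'_def termT'_def)
qed

end

theorem mainTheorem4:
  fixes scal :: "qpi \<Rightarrow> 'v::ab_group_add \<Rightarrow> 'v"
    and P :: "int \<Rightarrow> 'v \<Rightarrow> 'v" and E F :: "'v \<Rightarrow> 'v"
  assumes "integrable scal P E F"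
  shows "\<exists>T. qlinear scal T \<and> bij T \<and>
     (\<forall>k. T ` range (P (- k)) = range (P k)) \<and>
     (\<forall>k. \<forall>v\<in>range (P (- k)).
        finite {d. int d \<ge> max 0 (- k) \<and> scal ((- qv) ^ d) (divpow scal E (nat (k + int d)) (divpow scal F d v)) \<noteq> 0} \<and>
        T v = fsum (\<lambda>d. scal ((- qv) ^ d) (divpow scal E (nat (k + int d)) (divpow scal F d v)))
                   {d. int d \<ge> max 0 (- k)}) \<and>
     (\<forall>k. \<forall>v\<in>range (P k).
        finite {d. int d \<ge> max 0 (- k) \<and> scal (qinv (- qv) ^ d) (divpow_bar scal F (nat (k + int d)) (divpow_bar scal E d v)) \<noteq> 0} \<and>
        inv T v = fsum (\<lambda>d. scal (qinv (- qv) ^ d) (divpow_bar scal F (nat (k + int d)) (divpow_bar scal E d v)))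
                   {d. int d \<ge> max 0 (- k)})"
  using imod.final_part[of scal P E F] assms by (simp add: imod_def)


end
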